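(* Let $r,h\ge 2$ and $g,m$ be positive integers with $g+h<gr$, put $n=rg$, and let $q$ be a prime power with $q^m\ge \frac{mn}{r}$. If (i) $m\ge r$, or (ii) $m<r$ and there exists a $q$-ary $[r,r-m,\ge h+2]$ linear code, then there exists an MR $(n,r,h,1)$-LRC over a field of size $\ell=q^{\min\{hm,\frac{nm}{r}\}}$.
   Context: Definition: let $\ell$ be a prime power, $a,g,r,h$ positive integers with $ga+h<gr$, $n=gr$, $k=n-ga-h$. An MR (maximally recoverable) $(n,r,h,a)_\ell$-LRC is an $[n,k]$ linear code over $\mathbb{F}_\ell$ with a parity-check matrix $H\in\mathbb{F}_\ell^{(n-k)\times n}$ of the block form whose first $ga$ rows are block diagonal with diagonal blocks $A_1,\dots,A_g$ (each of size $a\times r$, the coordinates split into $g$ consecutive groups of size $r$) and whose last $h$ rows are $(D_1|\cdots|D_g)$ with each $D_i$ of size $h\times r$, such that (i) each $A_i$ generates an $[r,a,r-a+1]_\ell$ MDS code, and (ii) every set of $ag+h$ columns of $H$ consisting of any $a$ columns from each group together with any $h$ further columns is linearly independent over $\mathbb{F}_\ell$. "An MR $(n,r,h,a)$-LRC over a field of size $\ell$" means an MR $(n,r,h,a)_\ell$-LRC. *)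

theory Defs
  imports Complex_Main "HOL-Computational_Algebra.Primes"
begin

text \<open>Matrices are functions nat => nat => 'a (row, column), with explicit dimensions.
  Vectors of length len are functions nat => 'a, only indices < len being relevant.\<close>

definition hamming_weight :: "(nat \<Rightarrow> 'a::zero) \<Rightarrow> nat \<Rightarrow> nat" where
  "hamming_weight x len = card {j. j < len \<and> x j \<noteq> 0}"

definition codeword :: "(nat \<Rightarrow> nat \<Rightarrow> 'a::field) \<Rightarrow> nat \<Rightarrow> (nat \<Rightarrow> 'a) \<Rightarrow> nat \<Rightarrow> 'a" where
  "codeword G k u = (\<lambda>j. \<Sum>i<k. u i * G i j)"

definition rows_lin_indep :: "(nat \<Rightarrow> nat \<Rightarrow> 'a::field) \<Rightarrow> nat \<Rightarrow> nat \<Rightarrow> bool" where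
  "rows_lin_indep G k len \<longleftrightarrow>
     (\<forall>u. (\<forall>j<len. codeword G k u j = 0) \<longrightarrow> (\<forall>i<k. u i = 0))"

definition cols_lin_indep :: "(nat \<Rightarrow> nat \<Rightarrow> 'a::field) \<Rightarrow> nat \<Rightarrow> nat set \<Rightarrow> bool" where
  "cols_lin_indep H nrows S \<longleftrightarrow>
     (\<forall>c. (\<forall>i<nrows. (\<Sum>j\<in>S. c j * H i j) = 0) \<longrightarrow> (\<forall>j\<in>S. c j = 0))"

definition lin_code_ge :: "(nat \<Rightarrow> nat \<Rightarrow> 'a::field) \<Rightarrow> nat \<Rightarrow> nat \<Rightarrow> nat \<Rightarrow> bool" where
  "lin_code_ge G len k d \<longleftrightarrow> rows_lin_indep G k len \<and>
     (\<forall>u. (\<exists>j<len. codeword G k u j \<noteq> 0) \<longrightarrow> d \<le> hamming_weight (codeword G k u) len)"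

definition lin_code :: "(nat \<Rightarrow> nat \<Rightarrow> 'a::field) \<Rightarrow> nat \<Rightarrow> nat \<Rightarrow> nat \<Rightarrow> bool" where
  "lin_code G len k d \<longleftrightarrow> lin_code_ge G len k d \<and>
     (\<exists>u. (\<exists>j<len. codeword G k u j \<noteq> 0) \<and> hamming_weight (codeword G k u) len = d)"

text \<open>Block parity-check matrix: first g*a rows block diagonal with blocks A 0, ..., A (g-1)
  (each a x r), last h rows given by D (h x n, n = g*r).\<close>
definition block_pcm :: "nat \<Rightarrow> nat \<Rightarrow> nat \<Rightarrow> (nat \<Rightarrow> nat \<Rightarrow> nat \<Rightarrow> 'a::zero) \<Rightarrow> (nat \<Rightarrow> nat \<Rightarrow> 'a) \<Rightarrow> nat \<Rightarrow> nat \<Rightarrow> 'a" where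
  "block_pcm g r a A D = (\<lambda>row j.
     if row < g * a then
       (if (row div a) * r \<le> j \<and> j < (row div a + 1) * r
        then A (row div a) (row mod a) (j - (row div a) * r) else 0)
     else D (row - g * a) j)"

definition MR_LRC :: "nat \<Rightarrow> nat \<Rightarrow> nat \<Rightarrow> nat \<Rightarrow> (nat \<Rightarrow> nat \<Rightarrow> nat \<Rightarrow> 'a::field) \<Rightarrow> (nat \<Rightarrow> nat \<Rightarrow> 'a) \<Rightarrow> bool" where
  "MR_LRC g r h a A D \<longleftrightarrow>
     0 < a \<and> 0 < g \<and> 0 < r \<and> 0 < h \<and> g * a + h < g * r \<and>
     (\<forall>i<g. lin_code (A i) r a (r - a + 1)) \<and>
     (\<forall>S. S \<subseteq> {0..<g * r} \<and> card S = g * a + h \<and>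
          (\<forall>i<g. a \<le> card (S \<inter> {i * r..<(i + 1) * r})) \<longrightarrow>
          cols_lin_indep (block_pcm g r a A D) (g * a + h) S)"

end

theory Submission
  imports Defs "HOL-Computational_Algebra.Polynomial" "HOL-Computational_Algebra.Primes"
    "HOL-Library.FuncSet" "HOL-Algebra.Multiplicative_Group" "HOL-Library.Function_Algebras"
begin

lemma ff_pow_card:
  fixes x :: "'a::{finite,field}"
  shows "x ^ card (UNIV :: 'a set) = x"
proof (cases "x = 0")
  case False
  have "x * (\<Prod>y\<in>UNIV-{0}. x * y) = x * x ^ (card (UNIV :: 'a set) - 1) * \<Prod>(UNIV-{0})"
    by (simp add: prod.distrib mult_ac)
  also have "x * x ^ (card (UNIV :: 'a set) - 1) = x ^ Suc (card (UNIV :: 'a set) - 1)"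
    by (subst power_Suc) auto
  also have "Suc (card (UNIV :: 'a set) - 1) = card (UNIV :: 'a set)"
    using finite_UNIV_card_ge_0[where ?'a = 'a] by simp
  also have "(\<Prod>y\<in>UNIV-{0}. x * y) = (\<Prod>y\<in>UNIV-{0}. y)"
    by (rule prod.reindex_bij_witness[of _ "\<lambda>y. y / x" "\<lambda>y. x * y"]) (use False in auto)
  finally show ?thesis
    by simp
qed (use finite_UNIV_card_ge_0[where ?'a = 'a] in auto)

lemma ff_char_pos: "CHAR('a::{finite,field}) > 0"
  by (rule finite_imp_CHAR_pos) simp

lemma ff_char_prime: "prime CHAR('a::{finite,field})"
  using prime_CHAR_semidom ff_char_pos by blast

lemma ff_card_zero: "of_nat (card (UNIV::'a::{finite,field} set)) = (0::'a)"
proof -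
  have "(\<Sum>y\<in>UNIV. y + (1::'a)) = (\<Sum>y\<in>UNIV. y)"
    by (rule sum.reindex_bij_witness[of _ "\<lambda>y. y - 1" "\<lambda>y. y + 1"]) auto
  thus ?thesis by (simp add: sum.distrib)
qed

lemma ff_char_eq:
  assumes "prime p" "card (UNIV::'a::{finite,field} set) = p ^ k"
  shows "CHAR('a) = p"
proof -
  have "CHAR('a) dvd p ^ k" using ff_card_zero[where 'a='a] assms(2) of_nat_eq_0_iff_char_dvd by metis
  hence "CHAR('a) dvd p" using ff_char_prime prime_dvd_power by blast
  thus ?thesis using ff_char_prime assms(1) primes_dvd_imp_eq by blast
qed

lemma frob_add:
  fixes x y :: "'a::{finite,field}"
  assumes "Q = CHAR('a) ^ e"
  shows "(x + y) ^ Q = x ^ Q + y ^ Q"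
  using freshmans_dream'[OF ff_char_prime assms] .

definition Fx :: "nat \<Rightarrow> 'a::field set" where "Fx Q = {x. x ^ Q = x}"

lemma nat_geom: "(Q::nat) \<ge> 1 \<Longrightarrow> Q ^ s - 1 = (Q - 1) * (\<Sum>i<s. Q ^ i)"
proof -
  assume "Q \<ge> 1"
  have "int (Q ^ s - 1) = int Q ^ s - 1" using \<open>Q \<ge> 1\<close> by (simp add: of_nat_diff)
  also have "\<dots> = (int Q - 1) * (\<Sum>i<s. int Q ^ i)" by (rule power_diff_1_eq)
  also have "\<dots> = int ((Q - 1) * (\<Sum>i<s. Q ^ i))" using \<open>Q \<ge> 1\<close> by (simp add: of_nat_diff)
  finally show ?thesis by (simp only: of_nat_eq_iff)
qed

lemma Fx_card:
  fixes Q s :: nat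
  assumes card: "card (UNIV::'a::{finite,field} set) = Q ^ s" and s: "s > 0" and Q: "Q \<ge> 2"
  shows "card (Fx Q :: 'a set) = Q"
proof (rule antisym)
  define pq :: "'a poly" where "pq = Polynomial.monom 1 Q - [:0,1:]"
  have ev: "poly pq x = x ^ Q - x" for x by (simp add: pq_def poly_monom)
  have "Polynomial.coeff pq Q = 1" using Q by (simp add: pq_def coeff_pCons split: nat.split)
  hence pq0: "pq \<noteq> 0" by auto
  have "degree pq \<le> Q" unfolding pq_def
    by (rule degree_diff_le) (use Q in \<open>auto simp: degree_monom_le degree_pCons_eq_if\<close>)
  moreover have "Fx Q = {x. poly pq x = (0::'a)}" by (auto simp: Fx_def ev)
  ultimately show "card (Fx Q :: 'a set) \<le> Q" using card_poly_roots_bound[OF pq0] by simp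
next
  define c where "c = (\<Sum>i<s. Q ^ i)"
  define N where "N = Q ^ s - 1"
  have Nc: "N = (Q - 1) * c" unfolding N_def c_def using Q nat_geom by simp
  have c1: "c \<ge> 1" unfolding c_def using s by (simp add: sum.remove[of "{..<s}" 0] )
  define R :: "'a poly" where "R = (\<Sum>i<c. Polynomial.monom 1 ((Q - 1) * i))"
  have evR: "poly R x = (\<Sum>i<c. (x ^ (Q - 1)) ^ i)" for x
    by (simp add: R_def poly_sum poly_monom power_mult)
  have "poly R 0 = 1" unfolding evR using c1 Q
    by (simp add: sum.remove[of "{..<c}" 0] power_0_left)
  hence R0: "R \<noteq> 0" by auto
  have degR: "degree R \<le> (Q - 1) * (c - 1)" unfolding R_def
    by (rule degree_sum_le) (auto intro!: order.trans[OF degree_monom_le])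
  define A where "A = {x::'a. x ^ (Q - 1) = 1}"
  have "UNIV - {0} \<subseteq> A \<union> {x. poly R x = 0}"
  proof
    fix x :: 'a assume "x \<in> UNIV - {0}"
    hence x0: "x \<noteq> 0" by auto
    have "x ^ Suc N = x" using ff_pow_card[of x] card Q unfolding N_def
      by (metis Suc_diff_1 less_le_trans nat_zero_less_power_iff pos2 zero_less_iff_neq_zero s)
    hence xN: "x ^ N = 1" using x0 by simp
    have "x ^ N - 1 = (x ^ (Q - 1) - 1) * poly R x"
      unfolding evR Nc power_mult by (rule power_diff_1_eq)
    hence "(x ^ (Q - 1) - 1) * poly R x = 0" using xN by simp
    thus "x \<in> A \<union> {x. poly R x = 0}" unfolding A_def by auto
  qed
  hence "card (UNIV - {0::'a}) \<le> card (A \<union> {x. poly R x = 0})" by (intro card_mono) auto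
  also have "\<dots> \<le> card A + card {x. poly R x = 0}" by (rule card_Un_le)
  also have "\<dots> \<le> card A + (Q - 1) * (c - 1)" using card_poly_roots_bound[OF R0] degR by simp
  finally have "N \<le> card A + (Q - 1) * (c - 1)" using card unfolding N_def by (simp add: card_Diff_singleton)
  hence "(Q - 1) * c \<le> card A + (Q - 1) * (c - 1)" using Nc by simp
  moreover have "(Q - 1) * c = (Q - 1) * (c - 1) + (Q - 1)" using c1
    by (metis add.commute le_add_diff_inverse mult.right_neutral distrib_left)
  ultimately have cA: "Q - 1 \<le> card A" by linarith
  have "(0::'a) ^ (Q - 1) = 0" using Q by (intro zero_power) simp
  hence "0 \<notin> A" unfolding A_def by (metis zero_neq_one mem_Collect_eq)
  have "insert 0 A \<subseteq> Fx Q"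
  proof
    fix x :: 'a assume x: "x \<in> insert 0 A"
    have QQ: "Q = Suc (Q - 1)" using Q by simp
    show "x \<in> Fx Q"
    proof (cases "x = 0")
      case True thus ?thesis unfolding Fx_def using Q by simp
    next
      case False
      hence "x ^ (Q - 1) = 1" using x unfolding A_def by simp
      hence "x ^ Q = x" by (subst QQ, simp only: power_Suc) simp
      thus ?thesis unfolding Fx_def by simp
    qed
  qed
  hence "card (insert 0 A) \<le> card (Fx Q :: 'a set)" by (intro card_mono) auto
  thus "Q \<le> card (Fx Q :: 'a set)" using cA \<open>0 \<notin> A\<close> by simp
qed

definition subfld :: "'a::field set \<Rightarrow> bool" where
  "subfld E \<longleftrightarrow> 0 \<in> E \<and> 1 \<in> E \<and> (\<forall>x\<in>E. \<forall>y\<in>E. x + y \<in> E \<and> x * y \<in> E) \<and> (\<forall>x\<in>E. - x \<in> E \<and> inverse x \<in> E)"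

lemma subfld_UNIV: "subfld UNIV" by (simp add: subfld_def)

lemma frob_sum:
  fixes f :: "'b \<Rightarrow> 'a::field"
  assumes add: "\<And>x y::'a. (x+y)^Q = x^Q + y^Q" and Q: "Q > 0"
  shows "(\<Sum>j\<in>J. f j) ^ Q = (\<Sum>j\<in>J. f j ^ Q)"
proof (induction J rule: infinite_finite_induct)
  case (infinite A) thus ?case using Q by simp
next
  case empty thus ?case using Q by simp
next
  case (insert x F) thus ?case by (simp add: add)
qed

lemma frob_diff:
  fixes x y :: "'a::field"
  assumes add: "\<And>x y::'a. (x+y)^Q = x^Q + y^Q"
  shows "(x - y)^Q = x^Q - y^Q"
  using add[of "x - y" y] by (simp add: algebra_simps)

lemma Fx_subfld:
  assumes add: "\<And>x y::'a::field. (x+y)^Q = x^Q + y^Q" and Q: "Q > 0"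
  shows "subfld (Fx Q :: 'a set)"
  unfolding subfld_def Fx_def
proof (intro conjI ballI)
  show "(0::'a) \<in> {x. x ^ Q = x}" using Q by simp
  show "(1::'a) \<in> {x. x ^ Q = x}" by simp
  fix x assume x: "x \<in> {x::'a. x ^ Q = x}"
  show "- x \<in> {x::'a. x ^ Q = x}"
    using add[of "-x" x] x zero_power[OF Q, where 'a='a] by (simp add: eq_neg_iff_add_eq_0)
  show "inverse x \<in> {x::'a. x ^ Q = x}" using x by (simp add: power_inverse)
  fix y assume y: "y \<in> {x::'a. x ^ Q = x}"
  show "x + y \<in> {x::'a. x ^ Q = x}" using x y add by simp
  show "x * y \<in> {x::'a. x ^ Q = x}" using x y by (simp add: power_mult_distrib)
qed

lemma moore:
  fixes \<gamma> c :: "nat \<Rightarrow> 'a::field"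
  assumes add: "\<And>x y::'a. (x+y)^Q = x^Q + y^Q" and Q: "Q > 0"
  shows "finite J \<Longrightarrow> card J \<le> s \<Longrightarrow>
    (\<forall>k. (\<forall>j\<in>J. k j \<in> Fx Q) \<longrightarrow> (\<Sum>j\<in>J. k j * \<gamma> j) = 0 \<longrightarrow> (\<forall>j\<in>J. k j = 0)) \<Longrightarrow>
    (\<forall>t<s. (\<Sum>j\<in>J. c j * \<gamma> j ^ (Q^t)) = 0) \<Longrightarrow> \<forall>j\<in>J. c j = 0"
proof (induction s arbitrary: J \<gamma> c)
  case 0 thus ?case by auto
next
  case (Suc s)
  note fin = Suc.prems(1) and H = Suc.prems(3) and eqs = Suc.prems(4)
  show ?case
  proof (rule ccontr)
    assume "\<not> (\<forall>j\<in>J. c j = 0)"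
    then obtain j0 where j0: "j0 \<in> J" "c j0 \<noteq> 0" by auto
    define c' where "c' j = c j / c j0" for j
    have c'j0: "c' j0 = 1" using j0 by (simp add: c'_def)
    have eq': "(\<Sum>j\<in>J. c' j * \<gamma> j ^ (Q^t)) = 0" if "t < Suc s" for t
    proof -
      have "(\<Sum>j\<in>J. c' j * \<gamma> j ^ (Q^t)) = (\<Sum>j\<in>J. c j * \<gamma> j ^ (Q^t)) / c j0"
        by (simp add: c'_def sum_divide_distrib)
      thus ?thesis using eqs that by simp
    qed
    define d where "d j = c' j - c' j ^ Q" for j
    define J' where "J' = J - {j0}"
    have dj0: "d j0 = 0" by (simp add: d_def c'j0)
    have eqd: "(\<Sum>j\<in>J'. d j * (\<gamma> j ^ Q) ^ (Q^t)) = 0" if "t < s" for t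
    proof -
      have pw: "(\<gamma> j ^ Q) ^ (Q^t) = \<gamma> j ^ (Q ^ Suc t)" for j
        by (simp add: power_mult[symmetric] mult.commute)
      have "(\<Sum>j\<in>J. c' j ^ Q * \<gamma> j ^ (Q ^ Suc t)) = (\<Sum>j\<in>J. (c' j * \<gamma> j ^ (Q^t)) ^ Q)"
        by (simp add: power_mult_distrib power_mult[symmetric] mult.commute)
      also have "\<dots> = (\<Sum>j\<in>J. c' j * \<gamma> j ^ (Q^t)) ^ Q"
        by (rule frob_sum[OF add Q, symmetric])
      also have "\<dots> = 0" using eq'[of t] that Q by simp
      finally have z2: "(\<Sum>j\<in>J. c' j ^ Q * \<gamma> j ^ (Q ^ Suc t)) = 0" .
      have z1: "(\<Sum>j\<in>J. c' j * \<gamma> j ^ (Q ^ Suc t)) = 0" using eq'[of "Suc t"] that by simp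
      have "(\<Sum>j\<in>J. d j * (\<gamma> j ^ Q) ^ (Q^t)) = 
            (\<Sum>j\<in>J. c' j * \<gamma> j ^ (Q ^ Suc t)) - (\<Sum>j\<in>J. c' j ^ Q * \<gamma> j ^ (Q ^ Suc t))"
        by (simp add: pw d_def algebra_simps sum_subtractf)
      also have "\<dots> = 0" using z1 z2 by simp
      also have "(\<Sum>j\<in>J. d j * (\<gamma> j ^ Q) ^ (Q^t)) = (\<Sum>j\<in>J'. d j * (\<gamma> j ^ Q) ^ (Q^t))"
        unfolding J'_def using fin j0 dj0 by (simp add: sum.remove)
      finally show ?thesis .
    qed
    have finJ': "finite J'" using fin by (simp add: J'_def)
    have cardJ': "card J' \<le> s" using Suc.prems(2) j0 fin by (simp add: J'_def)
    have H': "\<forall>k. (\<forall>j\<in>J'. k j \<in> Fx Q) \<longrightarrow> (\<Sum>j\<in>J'. k j * \<gamma> j ^ Q) = 0 \<longrightarrow> (\<forall>j\<in>J'. k j = 0)"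
    proof (intro allI impI)
      fix k assume kF: "\<forall>j\<in>J'. k j \<in> Fx Q" and ks: "(\<Sum>j\<in>J'. k j * \<gamma> j ^ Q) = 0"
      have "(\<Sum>j\<in>J'. k j * \<gamma> j ^ Q) = (\<Sum>j\<in>J'. (k j * \<gamma> j) ^ Q)"
        using kF by (intro sum.cong) (auto simp: Fx_def power_mult_distrib)
      also have "\<dots> = (\<Sum>j\<in>J'. k j * \<gamma> j) ^ Q" by (rule frob_sum[OF add Q, symmetric])
      finally have s0: "(\<Sum>j\<in>J'. k j * \<gamma> j) = 0" using ks by simp
      define k' where "k' = k(j0 := 0)"
      have "(\<Sum>j\<in>J. k' j * \<gamma> j) = (\<Sum>j\<in>J'. k' j * \<gamma> j)"
        unfolding J'_def using fin j0 by (simp add: sum.remove k'_def)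
      also have "\<dots> = (\<Sum>j\<in>J'. k j * \<gamma> j)" by (intro sum.cong) (auto simp: k'_def J'_def)
      finally have "(\<Sum>j\<in>J. k' j * \<gamma> j) = 0" using s0 by simp
      moreover have "\<forall>j\<in>J. k' j \<in> Fx Q" using kF Q by (auto simp: k'_def J'_def Fx_def)
      ultimately have "\<forall>j\<in>J. k' j = 0" using H by blast
      thus "\<forall>j\<in>J'. k j = 0"
      proof (intro ballI)
        fix j assume "\<forall>j\<in>J. k' j = 0" "j \<in> J'"
        hence "k' j = 0" "j \<noteq> j0" by (auto simp: J'_def)
        thus "k j = 0" by (simp add: k'_def)
      qed
    qed
    have "\<forall>j\<in>J'. d j = 0" using Suc.IH[OF finJ' cardJ' H'] eqd by blast
    hence inF: "\<forall>j\<in>J. c' j \<in> Fx Q" using c'j0 unfolding d_def J'_def Fx_def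
      by (metis (mono_tags, lifting) DiffI eq_iff_diff_eq_0 mem_Collect_eq power_one singletonD)
    have "(\<Sum>j\<in>J. c' j * \<gamma> j) = 0" using eq'[of 0] by simp
    hence "\<forall>j\<in>J. c' j = 0" using H inF by blast
    thus False using c'j0 j0 by simp
  qed
qed

lemma vdm:
  fixes z a :: "nat \<Rightarrow> 'a::field"
  shows "finite I \<Longrightarrow> card I \<le> s \<Longrightarrow> inj_on a I \<Longrightarrow> (\<forall>u<s. (\<Sum>i\<in>I. z i * a i ^ u) = 0) \<Longrightarrow> \<forall>i\<in>I. z i = 0"
proof (induction s arbitrary: I z)
  case 0 thus ?case by auto
next
  case (Suc s)
  show ?case
  proof (cases "I = {}")
    case True thus ?thesis by simp
  next
    case False
    then obtain i0 where i0: "i0 \<in> I" by auto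
    define z' where "z' i = z i * (a i - a i0)" for i
    define I' where "I' = I - {i0}"
    have eq: "(\<Sum>i\<in>I'. z' i * a i ^ u) = 0" if "u < s" for u
    proof -
      have "(\<Sum>i\<in>I. z' i * a i ^ u) = (\<Sum>i\<in>I. z i * a i ^ Suc u) - a i0 * (\<Sum>i\<in>I. z i * a i ^ u)"
        by (simp add: z'_def algebra_simps sum_subtractf sum_distrib_left)
      also have "\<dots> = 0" using Suc.prems(4)[rule_format, of "Suc u"] Suc.prems(4)[rule_format, of u] that by simp
      also have "(\<Sum>i\<in>I. z' i * a i ^ u) = (\<Sum>i\<in>I'. z' i * a i ^ u)"
        unfolding I'_def using Suc.prems(1) i0 by (simp add: sum.remove z'_def)
      finally show ?thesis .
    qed
    have "\<forall>i\<in>I'. z' i = 0"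
    proof -
      have "card I' \<le> s" "finite I'" "inj_on a I'" using Suc.prems i0 by (auto simp: I'_def intro: inj_on_subset)
      thus ?thesis using Suc.IH[of I' z'] eq by blast
    qed
    hence z0: "\<forall>i\<in>I'. z i = 0" using Suc.prems(3) i0 by (auto simp: z'_def I'_def inj_on_def)
    have "(\<Sum>i\<in>I. z i * a i ^ 0) = 0" using Suc.prems(4) by blast
    also have "(\<Sum>i\<in>I. z i * a i ^ 0) = z i0 + (\<Sum>i\<in>I'. z i)"
      unfolding I'_def using Suc.prems(1) i0 by (simp add: sum.remove)
    finally have "z i0 = 0" using z0 by simp
    thus ?thesis using z0 by (auto simp: I'_def)
  qed
qed

lemma greedy:
  fixes sm :: "'a::field \<Rightarrow> 'v::ab_group_add \<Rightarrow> 'v"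
  assumes sm_add1: "\<And>a b v. sm (a+b) v = sm a v + sm b v"
    and sm_add2: "\<And>a u v. sm a (u+v) = sm a u + sm a v"
    and sm_assoc: "\<And>a b v. sm a (sm b v) = sm (a*b) v"
    and sm_one: "\<And>v. sm 1 v = v"
    and E: "subfld E" "finite E"
    and V: "finite V" "\<And>x y. x\<in>V \<Longrightarrow> y\<in>V \<Longrightarrow> x+y\<in>V" "\<And>a x. a\<in>E \<Longrightarrow> x\<in>V \<Longrightarrow> sm a x \<in> V"
    and C: "C \<subseteq> V" "0 \<in> C" "\<And>x y. x\<in>C \<Longrightarrow> y\<in>C \<Longrightarrow> x+y\<in>C" "\<And>a x. a\<in>E \<Longrightarrow> x\<in>C \<Longrightarrow> sm a x \<in> C"
    and card: "card V = card C * card E ^ d"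
  shows "\<exists>w. (\<forall>t<d. w t \<in> V) \<and>
           (\<forall>k. (\<forall>t<d. k t \<in> E) \<longrightarrow> (\<Sum>t<d. sm (k t) (w t)) \<in> C \<longrightarrow> (\<forall>t<d. k t = 0)) \<and>
           (\<forall>v\<in>V. \<exists>k c. (\<forall>t<d. k t \<in> E) \<and> c \<in> C \<and> v = c + (\<Sum>t<d. sm (k t) (w t)))"
proof -
  have E0: "0 \<in> E" and E1: "1 \<in> E" and Eadd: "\<And>x y. x\<in>E \<Longrightarrow> y\<in>E \<Longrightarrow> x+y\<in>E"
    and Emul: "\<And>x y. x\<in>E \<Longrightarrow> y\<in>E \<Longrightarrow> x*y\<in>E" and Eneg: "\<And>x. x\<in>E \<Longrightarrow> -x\<in>E"
    and Einv: "\<And>x. x\<in>E \<Longrightarrow> inverse x\<in>E"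
    using E(1) unfolding subfld_def by auto
  have Ediff: "x - y \<in> E" if "x \<in> E" "y \<in> E" for x y
    using Eadd[OF that(1) Eneg[OF that(2)]] by simp
  have sm0: "sm 0 v = 0" for v using sm_add1[of 0 0 v] by simp
  have sm0': "sm a 0 = 0" for a using sm_add2[of a 0 0] by simp
  have smneg: "sm (-a) v = - sm a v" for a v using sm_add1[of a "-a" v] sm0 by (simp add: eq_neg_iff_add_eq_0 add.commute)
  have smdiff: "sm (a - b) v = sm a v - sm b v" for a b v using sm_add1[of a "-b" v] smneg by simp
  have smsum: "sm a (\<Sum>t<j. f t) = (\<Sum>t<j. sm a (f t))" for a and j::nat and f
    by (induction j) (simp_all add: sm0' sm_add2)
  have V0: "0 \<in> V" using C by auto
  have Vsum: "(\<Sum>t<j. sm (k t) (w t)) \<in> V" if "\<forall>t<j. k t \<in> E" "\<forall>t<j. w t \<in> V" for j::nat and k w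
    using that by (induction j) (auto intro: V V0)
  have Cneg: "- x \<in> C" if "x \<in> C" for x using C(4)[OF Eneg[OF E1] that] smneg sm_one by simp
  have Cdiff: "x - y \<in> C" if "x \<in> C" "y \<in> C" for x y using C(3)[OF that(1) Cneg[OF that(2)]] by simp
  have finC: "finite C" using C(1) V(1) finite_subset by blast
  have cardC: "card C \<ge> 1" using finC C(2) by (metis One_nat_def Suc_leI card_gt_0_iff empty_iff)
  have cardE: "card E \<ge> 2"
  proof -
    have "{0,1} \<subseteq> E" using E0 E1 by auto
    hence "card {0::'a,1} \<le> card E" using E(2) by (rule card_mono[rotated])
    thus ?thesis by simp
  qed
  define Sp where "Sp j w = (\<lambda>(c,k). c + (\<Sum>t<j. sm (k t) (w t))) ` (C \<times> Pi\<^sub>E {..<j} (\<lambda>_. E))" for j :: nat and w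
  define ind where "ind j w \<longleftrightarrow> (\<forall>k. (\<forall>t<j. k t \<in> E) \<longrightarrow> (\<Sum>t<j. sm (k t) (w t)) \<in> C \<longrightarrow> (\<forall>t<j. k t = 0))" for j :: nat and w
  have Sp_card: "card (Sp j w) = card C * card E ^ j" if "ind j w" for j w
  proof -
    have "inj_on (\<lambda>(c,k). c + (\<Sum>t<j. sm (k t) (w t))) (C \<times> Pi\<^sub>E {..<j} (\<lambda>_. E))"
    proof (rule inj_onI, clarify)
      fix c k c' k'
      assume c: "c \<in> C" "c' \<in> C" and k: "k \<in> Pi\<^sub>E {..<j} (\<lambda>_. E)" "k' \<in> Pi\<^sub>E {..<j} (\<lambda>_. E)"
        and eq: "c + (\<Sum>t<j. sm (k t) (w t)) = c' + (\<Sum>t<j. sm (k' t) (w t))"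
      have "(\<Sum>t<j. sm (k t - k' t) (w t)) = c' - c"
        using eq by (simp add: smdiff sum_subtractf algebra_simps)
      hence inC: "(\<Sum>t<j. sm (k t - k' t) (w t)) \<in> C" using Cdiff c by simp
      have inE: "\<forall>t<j. k t - k' t \<in> E" using k Ediff by (auto simp: PiE_iff)
      have "\<forall>t<j. k t - k' t = 0" 
        using spec[OF that[unfolded ind_def], of "\<lambda>t. k t - k' t"] inE inC by blast
      hence kk: "k = k'" using k by (intro PiE_ext) auto
      thus "c = c' \<and> k = k'" using eq by simp
    qed
    moreover have "finite (Pi\<^sub>E {..<j} (\<lambda>_. E))" using E(2) by (intro finite_PiE) auto
    ultimately show ?thesis unfolding Sp_def
      by (simp add: card_image card_cartesian_product card_PiE)
  qed
  have Sp_sub: "Sp j w \<subseteq> V" if "\<forall>t<j. w t \<in> V" for j w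
    unfolding Sp_def using that C(1) by (auto intro!: V(2) Vsum simp: PiE_iff)
  have main: "\<exists>w. (\<forall>t<j. w t \<in> V) \<and> ind j w" if "j \<le> d" for j
    using that
  proof (induction j)
    case 0 show ?case by (auto simp: ind_def)
  next
    case (Suc j)
    then obtain w where w: "\<forall>t<j. w t \<in> V" "ind j w" by auto
    have "card (Sp j w) < card V"
    proof -
      have "card E ^ j < card E ^ d" using Suc.prems cardE by (intro power_strict_increasing) auto
      hence "card C * card E ^ j < card C * card E ^ d" using cardC by simp
      thus ?thesis using Sp_card[OF w(2)] card by simp
    qed
    hence "\<not> V \<subseteq> Sp j w"
    proof (intro notI)
      assume lt: "card (Sp j w) < card V" and sub: "V \<subseteq> Sp j w"
      have "card V \<le> card (Sp j w)" by (rule card_mono[OF finite_subset[OF Sp_sub[OF w(1)] V(1)] sub])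
      thus False using lt by simp
    qed
    then obtain x where x: "x \<in> V" "x \<notin> Sp j w" by blast
    define w' where "w' = w(j := x)"
    have w'V: "\<forall>t<Suc j. w' t \<in> V" using w(1) x(1) by (auto simp: w'_def less_Suc_eq)
    have "ind (Suc j) w'" unfolding ind_def
    proof (rule allI, rule impI, rule impI)
      fix k assume kE: "\<forall>t<Suc j. k t \<in> E" and kC: "(\<Sum>t<Suc j. sm (k t) (w' t)) \<in> C"
      have split: "(\<Sum>t<Suc j. sm (k t) (w' t)) = (\<Sum>t<j. sm (k t) (w t)) + sm (k j) x"
        by (simp add: w'_def)
      have kj: "k j = 0"
      proof (rule ccontr)
        assume kj: "k j \<noteq> 0"
        define b where "b = inverse (k j)"
        have bE: "b \<in> E" using kE Einv by (simp add: b_def)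
        define c0 where "c0 = (\<Sum>t<Suc j. sm (k t) (w' t))"
        have "sm b c0 = (\<Sum>t<j. sm (b * k t) (w t)) + x"
          unfolding c0_def split sm_add2 smsum using kj by (simp add: sm_assoc b_def sm_one)
        hence xe: "x = sm b c0 + (\<Sum>t<j. sm (- (b * k t)) (w t))"
          by (simp add: smneg sum_negf algebra_simps)
        define k'' where "k'' = restrict (\<lambda>t. - (b * k t)) {..<j}"
        have k''P: "k'' \<in> Pi\<^sub>E {..<j} (\<lambda>_. E)" using kE bE Emul Eneg by (auto simp: k''_def)
        have "(\<Sum>t<j. sm (- (b * k t)) (w t)) = (\<Sum>t<j. sm (k'' t) (w t))"
          by (intro sum.cong) (auto simp: k''_def)
        hence "x = sm b c0 + (\<Sum>t<j. sm (k'' t) (w t))" using xe by simp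
        moreover have "sm b c0 \<in> C" using C(4)[OF bE] kC by (simp add: c0_def)
        ultimately have "x \<in> Sp j w" unfolding Sp_def using k''P by force
        thus False using x(2) by simp
      qed
      hence "(\<Sum>t<j. sm (k t) (w t)) \<in> C" using kC split sm0 by simp
      hence "\<forall>t<j. k t = 0" using w(2) kE unfolding ind_def by auto
      thus "\<forall>t<Suc j. k t = 0" using kj by (auto simp: less_Suc_eq)
    qed
    thus ?case using w'V by blast
  qed
  obtain w where w: "\<forall>t<d. w t \<in> V" "ind d w" using main by blast
  have "Sp d w = V"
    using Sp_sub[OF w(1)] Sp_card[OF w(2)] card V(1) by (intro card_subset_eq) auto
  hence "\<forall>v\<in>V. \<exists>k c. (\<forall>t<d. k t \<in> E) \<and> c \<in> C \<and> v = c + (\<Sum>t<d. sm (k t) (w t))"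
    unfolding Sp_def by (force simp: PiE_iff)
  thus ?thesis using w unfolding ind_def by blast
qed

definition tring :: "'a::field ring" where
  "tring = \<lparr>carrier = UNIV, monoid.mult = (\<lambda>x y. x * y), one = 1, ring.zero = 0, add = (\<lambda>x y. x + y)\<rparr>"

lemma tring_field: "field (tring :: 'a::field ring)"
proof -
  have "\<exists>y. x + y = 0" for x :: 'a using add.right_inverse by blast
  moreover have "x \<noteq> 0 \<Longrightarrow> \<exists>y. x * y = 1" for x :: 'a by (rule exI[of _ "inverse x"]) auto
  ultimately show ?thesis unfolding tring_def
    by unfold_locales (auto simp: algebra_simps Units_def)
qed

lemma tring_pow: "x [^]\<^bsub>(tring::'a::field ring)\<^esub> (n::nat) = x ^ n"
  by (induction n) (simp_all add: tring_def)

lemma cyc_gen: "\<exists>\<alpha>::'a::{finite,field}. \<forall>x. x \<noteq> 0 \<longrightarrow> (\<exists>i::nat. x = \<alpha> ^ i)"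
proof -
  interpret F: field "tring :: 'a ring" by (rule tring_field)
  have "finite (carrier (tring::'a ring))" by (simp add: tring_def)
  from F.finite_field_mult_group_has_gen[OF this] obtain a where
    a: "carrier (mult_of (tring::'a ring)) = {a [^]\<^bsub>tring\<^esub> i | i::nat. i \<in> UNIV}" by blast
  show ?thesis
  proof (rule exI[of _ a], intro allI impI)
    fix x :: 'a assume "x \<noteq> 0"
    hence "x \<in> carrier (mult_of (tring::'a ring))" by (simp add: tring_def)
    thus "\<exists>i::nat. x = a ^ i" unfolding a by (auto simp: tring_pow)
  qed
qed

abbreviation ip :: "int poly \<Rightarrow> 'a::comm_ring_1 poly" where "ip f \<equiv> map_poly of_int f"

lemma ip_coeff: "Polynomial.coeff (ip f :: 'a::comm_ring_1 poly) n = of_int (Polynomial.coeff f n)"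
  by (simp add: coeff_map_poly)

lemma ip_add: "(ip (f + g) :: 'a::comm_ring_1 poly) = ip f + ip g"
  by (rule poly_eqI) (simp add: ip_coeff)

lemma ip_diff: "(ip (f - g) :: 'a::comm_ring_1 poly) = ip f - ip g"
  by (rule poly_eqI) (simp add: ip_coeff)

lemma ip_mult: "(ip (f * g) :: 'a::comm_ring_1 poly) = ip f * ip g"
  by (rule poly_eqI) (simp add: ip_coeff coeff_mult)

lemma ip_monom: "(ip (Polynomial.monom c n) :: 'a::comm_ring_1 poly) = Polynomial.monom (of_int c) n"
  by (simp add: map_poly_monom)

lemma ip_zero_transfer:
  assumes "CHAR('a::comm_ring_1) = CHAR('b::comm_ring_1)"
  shows "(ip f = (0::'a poly)) = (ip f = (0::'b poly))"
proof -
  have "(ip f = (0::'a poly)) = (\<forall>n. int CHAR('a) dvd Polynomial.coeff f n)"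
    by (simp add: poly_eq_iff ip_coeff of_int_eq_0_iff_char_dvd)
  moreover have "(ip f = (0::'b poly)) = (\<forall>n. int CHAR('b) dvd Polynomial.coeff f n)"
    by (simp add: poly_eq_iff ip_coeff of_int_eq_0_iff_char_dvd)
  ultimately show ?thesis using assms by simp
qed

lemma embed:
  assumes cq: "card (UNIV::'q::{finite,field} set) = q" and cl: "card (UNIV::'l::{finite,field} set) = q ^ M"
    and M: "M > 0" and q: "q \<ge> 2" and ch: "CHAR('q) = CHAR('l)"
  shows "\<exists>\<psi>::'q \<Rightarrow> 'l. (\<forall>x y. \<psi> (x+y) = \<psi> x + \<psi> y) \<and> (\<forall>x y. \<psi> (x*y) = \<psi> x * \<psi> y) \<and> \<psi> 1 = 1
            \<and> inj \<psi> \<and> range \<psi> = Fx q"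
proof -
  obtain \<alpha> :: 'q where \<alpha>: "\<forall>x. x \<noteq> 0 \<longrightarrow> (\<exists>i::nat. x = \<alpha> ^ i)" using cyc_gen by blast
  define Mon where "Mon d \<longleftrightarrow> (\<exists>f::int poly. lead_coeff f = 1 \<and> degree f = d \<and> poly (ip f) \<alpha> = 0)" for d
  define fq :: "int poly" where "fq = Polynomial.monom 1 q - [:0,1:]"
  have cfq: "Polynomial.coeff fq n = (if n = q then 1 else 0) - (if n = 1 then 1 else 0)" for n
    by (simp add: fq_def coeff_monom coeff_pCons split: nat.split)
  have dfq: "degree fq = q"
  proof (rule antisym)
    show "degree fq \<le> q" by (rule degree_le) (use q in \<open>auto simp: cfq\<close>)
    show "q \<le> degree fq" by (rule le_degree) (use q in \<open>auto simp: cfq\<close>)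
  qed
  have lfq: "lead_coeff fq = 1" using q by (simp add: dfq cfq)
  have evfq: "poly (ip fq) x = x ^ q - x" for x :: "'a::comm_ring_1"
    by (simp add: fq_def ip_diff ip_monom poly_monom map_poly_pCons)
  have "Mon q" unfolding Mon_def using lfq dfq evfq[of \<alpha>] ff_pow_card[of \<alpha>] cq by auto
  define d0 where "d0 = (LEAST d. Mon d)"
  have "Mon d0" unfolding d0_def using \<open>Mon q\<close> by (rule LeastI)
  then obtain f0 where f0: "lead_coeff f0 = 1" "degree f0 = d0" "poly (ip f0) \<alpha> = 0" unfolding Mon_def by blast
  have f0nz: "f0 \<noteq> 0" using f0(1) by auto
  have red: "\<exists>s. ip (g - f0 * s) = (0::'q poly)" if g: "poly (ip g) \<alpha> = 0" for g
  proof -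
    obtain s t where st: "pseudo_divmod g f0 = (s, t)" by (cases "pseudo_divmod g f0") auto
    have "Polynomial.smult (Polynomial.coeff f0 (degree f0) ^ (Suc (degree g) - degree f0)) g = f0 * s + t"
      by (rule pseudo_divmod(1)[OF f0nz st])
    hence gst: "g = f0 * s + t" using f0(1) by simp
    have tdeg: "t = 0 \<or> degree t < d0" using pseudo_divmod(2)[OF f0nz st] f0(2) by simp
    have evt: "poly (ip t) \<alpha> = 0" using g f0(3) unfolding gst by (simp add: ip_add ip_mult)
    have "ip t = (0::'q poly)"
    proof (rule ccontr)
      assume T0: "ip t \<noteq> (0::'q poly)"
      hence "t \<noteq> 0" by auto
      hence dt: "degree t < d0" using tdeg by simp
      define T :: "'q poly" where "T = ip t"
      define D where "D = degree T"
      have DT: "D \<le> degree t" unfolding D_def T_def by (rule degree_le) (auto simp: ip_coeff coeff_eq_0)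
      define c0 where "c0 = Polynomial.coeff t D"
      have "lead_coeff T \<noteq> 0" using T0 by (simp add: T_def)
      hence c0nz: "(of_int c0 :: 'q) \<noteq> 0" by (simp add: c0_def D_def T_def ip_coeff)
      define c1 where "c1 = c0 ^ (q - 2)"
      have c1: "(of_int c1 :: 'q) * of_int c0 = 1"
      proof -
        have "(of_int c0 :: 'q) ^ q = of_int c0" using ff_pow_card[of "of_int c0 :: 'q"] cq by simp
        moreover have "q = Suc (Suc (q - 2))" using q by simp
        ultimately have "(of_int c0 :: 'q) * ((of_int c0) ^ (q - 2) * of_int c0) = of_int c0 * 1"
          by (metis mult.commute mult.right_neutral power_Suc)
        hence "(of_int c0 :: 'q) ^ (q - 2) * of_int c0 = 1" using c0nz by simp
        thus ?thesis by (simp add: c1_def)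
      qed
      define u :: "int poly" where "u = Polynomial.monom 1 D + (\<Sum>i<D. Polynomial.monom (c1 * Polynomial.coeff t i) i)"
      have cu: "Polynomial.coeff u n = (if n = D then 1 else 0) + (if n < D then c1 * Polynomial.coeff t n else 0)" for n
        by (simp add: u_def coeff_monom coeff_sum)
      have du: "degree u = D"
      proof (rule antisym)
        show "degree u \<le> D" by (rule degree_le) (auto simp: cu)
        show "D \<le> degree u" by (rule le_degree) (auto simp: cu)
      qed
      have lu: "lead_coeff u = 1" by (simp add: du cu)
      have "ip u = Polynomial.smult (of_int c1) T"
      proof (rule poly_eqI)
        fix n
        show "Polynomial.coeff (ip u) n = Polynomial.coeff (Polynomial.smult (of_int c1) T) n"
        proof (cases "n \<le> D")
          case True thus ?thesis using c1 by (auto simp: ip_coeff cu T_def c0_def)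
        next
          case False
          hence "Polynomial.coeff T n = 0" unfolding D_def by (intro coeff_eq_0) simp
          thus ?thesis using False by (simp add: ip_coeff cu)
        qed
      qed
      hence "poly (ip u) \<alpha> = 0" using evt by (simp add: T_def)
      hence "Mon D" unfolding Mon_def using lu du by blast
      moreover have "D < d0" using DT dt by simp
      ultimately show False unfolding d0_def using not_less_Least by blast
    qed
    hence "ip (g - f0 * s) = (0::'q poly)" unfolding gst by (simp add: ip_add ip_diff ip_mult)
    thus ?thesis by blast
  qed
  have d0pos: "d0 > 0"
  proof (rule ccontr)
    assume "\<not> d0 > 0"
    hence "degree f0 = 0" using f0(2) by simp
    hence "f0 = [:1:]" using f0(1) by (metis lead_coeff_pCons(1) degree_0_id)
    thus False using f0(3) by (simp add: map_poly_pCons)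
  qed
  have "\<exists>\<beta>::'l. poly (ip f0) \<beta> = 0"
  proof (rule ccontr)
    assume nr: "\<not> (\<exists>\<beta>::'l. poly (ip f0) \<beta> = 0)"
    obtain s where s: "ip (fq - f0 * s) = (0::'q poly)" using red[of fq] evfq[of \<alpha>] ff_pow_card[of \<alpha>] cq by auto
    hence "ip (fq - f0 * s) = (0::'l poly)" using ip_zero_transfer[OF ch] by blast
    hence fac: "(ip fq :: 'l poly) = ip f0 * ip s" by (simp add: ip_diff ip_mult)
    have cql: "card (Fx q :: 'l set) = q" using Fx_card[OF cl M q] .
    have "Polynomial.coeff (ip fq :: 'l poly) q = 1" using q by (simp add: ip_coeff cfq)
    hence fq0: "(ip fq :: 'l poly) \<noteq> 0" by auto
    hence s0: "(ip s :: 'l poly) \<noteq> 0" and f00: "(ip f0 :: 'l poly) \<noteq> 0" using fac by auto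
    have "degree (ip fq :: 'l poly) \<le> q" by (rule degree_le) (use q in \<open>auto simp: ip_coeff cfq\<close>)
    moreover have "degree (ip f0 :: 'l poly) = d0"
    proof -
      have "Polynomial.coeff (ip f0 :: 'l poly) d0 = 1" using f0 by (simp add: ip_coeff)
      hence "d0 \<le> degree (ip f0 :: 'l poly)" by (intro le_degree) simp
      moreover have "degree (ip f0 :: 'l poly) \<le> d0" using f0(2) by (intro degree_le) (auto simp: ip_coeff coeff_eq_0)
      ultimately show ?thesis by simp
    qed
    ultimately have ds: "degree (ip s :: 'l poly) \<le> q - 1"
      using fac degree_mult_eq[OF f00 s0] d0pos by simp
    have "Fx q \<subseteq> {x::'l. poly (ip s) x = 0}"
    proof
      fix x :: 'l assume "x \<in> Fx q"
      hence "poly (ip fq) x = 0" by (simp add: evfq Fx_def)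
      hence "poly (ip f0) x * poly (ip s) x = 0" using fac by simp
      thus "x \<in> {x::'l. poly (ip s) x = 0}" using nr by auto
    qed
    hence "card (Fx q :: 'l set) \<le> card {x::'l. poly (ip s) x = 0}" by (intro card_mono) auto
    also have "\<dots> \<le> q - 1" using card_poly_roots_bound[OF s0] ds by simp
    finally show False using cql q by simp
  qed
  then obtain \<beta> :: 'l where \<beta>: "poly (ip f0) \<beta> = 0" by blast
  have wd: "poly (ip g1) \<beta> = poly (ip g2) \<beta>" if "poly (ip g1) \<alpha> = poly (ip g2) \<alpha>" for g1 g2
  proof -
    have "poly (ip (g1 - g2)) \<alpha> = 0" using that by (simp add: ip_diff)
    then obtain s where "ip (g1 - g2 - f0 * s) = (0::'q poly)" using red by blast
    hence "ip (g1 - g2 - f0 * s) = (0::'l poly)" using ip_zero_transfer[OF ch] by blast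
    hence "poly (ip (g1 - g2 - f0 * s)) \<beta> = 0" by simp
    thus ?thesis using \<beta> by (simp add: ip_diff ip_mult)
  qed
  have rep: "\<exists>g. poly (ip g) \<alpha> = x" for x
  proof (cases "x = 0")
    case True thus ?thesis by (intro exI[of _ 0]) simp
  next
    case False
    then obtain i where "x = \<alpha> ^ i" using \<alpha> by blast
    thus ?thesis by (intro exI[of _ "Polynomial.monom 1 i"]) (simp add: ip_monom poly_monom)
  qed
  define \<psi> where "\<psi> x = poly (ip (SOME g. poly (ip g) \<alpha> = x)) \<beta>" for x
  have \<psi>ev: "\<psi> (poly (ip g) \<alpha>) = poly (ip g) \<beta>" for g
  proof -
    have "poly (ip (SOME g'. poly (ip g') \<alpha> = poly (ip g) \<alpha>)) \<alpha> = poly (ip g) \<alpha>"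
      by (rule someI[of _ g]) simp
    thus ?thesis unfolding \<psi>_def by (rule wd)
  qed
  have \<psi>add: "\<psi> (x + y) = \<psi> x + \<psi> y" for x y
  proof -
    obtain gx gy where "poly (ip gx) \<alpha> = x" "poly (ip gy) \<alpha> = y" using rep by blast
    moreover have "\<psi> (poly (ip (gx + gy)) \<alpha>) = poly (ip (gx+gy)) \<beta>" by (rule \<psi>ev)
    ultimately show ?thesis using \<psi>ev by (auto simp: ip_add)
  qed
  have \<psi>mult: "\<psi> (x * y) = \<psi> x * \<psi> y" for x y
  proof -
    obtain gx gy where "poly (ip gx) \<alpha> = x" "poly (ip gy) \<alpha> = y" using rep by blast
    moreover have "\<psi> (poly (ip (gx * gy)) \<alpha>) = poly (ip (gx*gy)) \<beta>" by (rule \<psi>ev)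
    ultimately show ?thesis using \<psi>ev by (auto simp: ip_mult)
  qed
  have \<psi>1: "\<psi> 1 = 1" using \<psi>ev[of 1] by simp
  have \<psi>0: "\<psi> 0 = 0" using \<psi>ev[of 0] by simp
  have \<psi>inj: "inj \<psi>"
  proof (rule injI)
    fix x y assume eq: "\<psi> x = \<psi> y"
    have "\<psi> (x - y) + \<psi> y = \<psi> x" using \<psi>add[of "x - y" y] by simp
    hence z: "\<psi> (x - y) = 0" using eq by simp
    show "x = y"
    proof (rule ccontr)
      assume "x \<noteq> y"
      hence "\<psi> ((x - y) * inverse (x - y)) = 1" using \<psi>1 by simp
      thus False using z \<psi>mult by simp
    qed
  qed
  have \<psi>pow: "\<psi> (x ^ n) = \<psi> x ^ n" for x n by (induction n) (simp_all add: \<psi>1 \<psi>mult)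
  have "range \<psi> \<subseteq> Fx q"
  proof
    fix z assume "z \<in> range \<psi>"
    then obtain x where "z = \<psi> x" by auto
    thus "z \<in> Fx q" using \<psi>pow[of x q] ff_pow_card[of x] cq by (simp add: Fx_def)
  qed
  moreover have "card (range \<psi>) = card (Fx q :: 'l set)"
    using card_image[OF \<psi>inj] cq Fx_card[OF cl M q] by simp
  ultimately have "range \<psi> = Fx q" by (intro card_subset_eq) auto
  thus ?thesis using \<psi>add \<psi>mult \<psi>1 \<psi>inj by blast
qed

lemma fsum_apply: "(\<Sum>t\<in>A. f t) (j::'b) = (\<Sum>t\<in>A. f t j)"
  by (induction A rule: infinite_finite_induct) auto

lemma codeword_diff: "codeword G k (\<lambda>i. u i - u' i) j = codeword G k u j - codeword G k u' j"
  by (simp add: codeword_def algebra_simps sum_subtractf)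

lemma codeword_add: "codeword G k (\<lambda>i. u i + u' i) j = codeword G k u j + codeword G k u' j"
  by (simp add: codeword_def algebra_simps sum.distrib)

lemma codeword_smult: "codeword G k (\<lambda>i. a * u i) j = a * codeword G k u j"
  by (simp add: codeword_def algebra_simps sum_distrib_left)

lemma codeword_restrict: "codeword G k (\<lambda>i. if i < k then u i else 0) j = codeword G k u j"
  by (simp add: codeword_def)

lemma code_points:
  fixes G :: "nat \<Rightarrow> nat \<Rightarrow> 'q::{finite,field}"
  assumes code: "lin_code_ge G r (r - m) (h + 2)" and mr: "m < r"
  shows "\<exists>Pq :: nat \<Rightarrow> nat \<Rightarrow> 'q. \<forall>\<kappa>. card {l. l < r \<and> \<kappa> l \<noteq> 0} \<le> h + 1 \<longrightarrow>
           (\<forall>t<m. (\<Sum>l<r. \<kappa> l * Pq l t) = 0) \<longrightarrow> (\<forall>l<r. \<kappa> l = 0)"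
proof -
  define k where "k = r - m"
  define ext :: "(nat \<Rightarrow> 'q) \<Rightarrow> nat \<Rightarrow> 'q" where "ext f = (\<lambda>l. if l < r then f l else 0)" for f
  define V where "V = {v::nat \<Rightarrow> 'q. \<forall>l\<ge>r. v l = 0}"
  define C where "C = {v. \<exists>u. v = ext (codeword G k u)}"
  define sm :: "'q \<Rightarrow> (nat \<Rightarrow> 'q) \<Rightarrow> (nat \<Rightarrow> 'q)" where "sm a v = (\<lambda>l. a * v l)" for a v
  have indep: "rows_lin_indep G k r" using code by (simp add: lin_code_ge_def k_def)
  have V_img: "V = ext ` (Pi\<^sub>E {..<r} (\<lambda>_. UNIV))"
  proof (intro equalityI subsetI)
    fix v assume "v \<in> V"
    hence "v = ext (restrict v {..<r})" by (auto simp: V_def ext_def fun_eq_iff)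
    thus "v \<in> ext ` (Pi\<^sub>E {..<r} (\<lambda>_. UNIV))" by auto
  qed (auto simp: V_def ext_def)
  have "inj_on ext (Pi\<^sub>E {..<r} (\<lambda>_. UNIV))"
  proof (rule inj_onI)
    fix f g assume "f \<in> Pi\<^sub>E {..<r} (\<lambda>_. UNIV)" "g \<in> Pi\<^sub>E {..<r} (\<lambda>_. UNIV)" "ext f = ext g"
    thus "f = g" by (intro PiE_ext) (auto simp: ext_def fun_eq_iff, metis)
  qed
  hence cardV: "card V = card (UNIV::'q set) ^ r" unfolding V_img
    by (simp add: card_image card_PiE)
  define cwe where "cwe u = ext (codeword G k u)" for u
  have C_img: "C = cwe ` (Pi\<^sub>E {..<k} (\<lambda>_. UNIV))"
  proof (intro equalityI subsetI)
    fix v assume "v \<in> C"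
    then obtain u where u: "v = ext (codeword G k u)" by (auto simp: C_def)
    have "codeword G k u = codeword G k (restrict u {..<k})" by (simp add: codeword_def fun_eq_iff)
    thus "v \<in> cwe ` (Pi\<^sub>E {..<k} (\<lambda>_. UNIV))" using u by (auto simp: cwe_def)
  qed (auto simp: C_def cwe_def)
  have "inj_on cwe (Pi\<^sub>E {..<k} (\<lambda>_. UNIV))"
  proof (rule inj_onI)
    fix f g assume f: "f \<in> Pi\<^sub>E {..<k} (\<lambda>_. UNIV)" and g: "g \<in> Pi\<^sub>E {..<k} (\<lambda>_. UNIV)" and eq: "cwe f = cwe g"
    have "\<forall>j<r. codeword G k (\<lambda>i. f i - g i) j = 0"
      using eq by (auto simp: cwe_def ext_def fun_eq_iff codeword_diff, metis)
    hence "\<forall>i<k. f i - g i = 0" using indep unfolding rows_lin_indep_def by blast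
    thus "f = g" using f g by (intro PiE_ext) auto
  qed
  hence cardC: "card C = card (UNIV::'q set) ^ k" unfolding C_img by (simp add: card_image card_PiE)
  have card: "card V = card C * card (UNIV::'q set) ^ m"
    using cardV cardC mr by (simp add: k_def power_add[symmetric])
  have CV: "C \<subseteq> V" by (auto simp: C_def V_def ext_def)
  have C0: "0 \<in> C" unfolding C_def
    by (rule CollectI, rule exI[of _ "\<lambda>_. 0"]) (auto simp: ext_def codeword_def fun_eq_iff)
  have Cadd: "x + y \<in> C" if "x \<in> C" "y \<in> C" for x y
  proof -
    obtain u u' where "x = ext (codeword G k u)" "y = ext (codeword G k u')" using \<open>x \<in> C\<close> \<open>y \<in> C\<close> unfolding C_def by blast
    hence "x + y = ext (codeword G k (\<lambda>i. u i + u' i))" by (auto simp: ext_def fun_eq_iff codeword_add)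
    thus ?thesis by (auto simp: C_def)
  qed
  have Csm: "sm a x \<in> C" if "x \<in> C" for a x
  proof -
    obtain u where "x = ext (codeword G k u)" using \<open>x \<in> C\<close> unfolding C_def by blast
    hence "sm a x = ext (codeword G k (\<lambda>i. a * u i))" by (auto simp: ext_def fun_eq_iff codeword_smult sm_def)
    thus ?thesis by (auto simp: C_def)
  qed
  have finV: "finite V" unfolding V_img by (intro finite_imageI finite_PiE) auto
  have Vadd: "x + y \<in> V" if "x \<in> V" "y \<in> V" for x y using that by (auto simp: V_def)
  have Vsm: "sm a x \<in> V" if "a \<in> UNIV" "x \<in> V" for a x using that by (auto simp: V_def sm_def)
  have sm1: "sm (a + b) v = sm a v + sm b v" for a b v by (simp add: sm_def fun_eq_iff algebra_simps)
  have sm2: "sm a (u + v) = sm a u + sm a v" for a u v by (simp add: sm_def fun_eq_iff algebra_simps)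
  have sm3: "sm a (sm b v) = sm (a * b) v" for a b v by (simp add: sm_def fun_eq_iff algebra_simps)
  have sm4: "sm 1 v = v" for v by (simp add: sm_def)
  have Csm': "sm a x \<in> C" if "a \<in> UNIV" "x \<in> C" for a x using Csm that by blast
  from greedy[of sm "UNIV::'q set" V C m, OF sm1 sm2 sm3 sm4 subfld_UNIV finite_UNIV finV Vadd Vsm CV C0 Cadd Csm' card]
  obtain w where w: "\<forall>v\<in>V. \<exists>kk c. (\<forall>t<m. kk t \<in> (UNIV::'q set)) \<and> c \<in> C \<and> v = c + (\<Sum>t<m. sm (kk t) (w t))"
    by blast
  define e where "e l = (\<lambda>l'. if l' = l then (1::'q) else 0)" for l :: nat
  have eV: "l < r \<Longrightarrow> e l \<in> V" for l by (auto simp: e_def V_def)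
  define dec where "dec l = (SOME p. fst p \<in> C \<and> e l = fst p + (\<Sum>t<m. sm (snd p t) (w t)))" for l
  have dec: "fst (dec l) \<in> C \<and> e l = fst (dec l) + (\<Sum>t<m. sm (snd (dec l) t) (w t))" if lr: "l < r" for l
  proof -
    obtain kk c where "c \<in> C" "e l = c + (\<Sum>t<m. sm (kk t) (w t))" using w eV[OF lr] by blast
    hence "\<exists>p. fst p \<in> C \<and> e l = fst p + (\<Sum>t<m. sm (snd p t) (w t))" by (intro exI[of _ "(c,kk)"]) simp
    thus ?thesis unfolding dec_def by (rule someI_ex)
  qed
  define Pq where "Pq l t = snd (dec l) t" for l t
  have Csum: "(\<lambda>j. \<Sum>l<n. a l * x l j) \<in> C" if "\<forall>l<n. x l \<in> C" for n :: nat and a x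
    using that
  proof (induction n)
    case 0 thus ?case using C0 by (simp add: zero_fun_def)
  next
    case (Suc n)
    have "(\<lambda>j. \<Sum>l<Suc n. a l * x l j) = (\<lambda>j. \<Sum>l<n. a l * x l j) + sm (a n) (x n)"
      by (simp add: fun_eq_iff sm_def)
    thus ?case using Suc Cadd Csm by simp
  qed
  show ?thesis
  proof (rule exI[of _ Pq], rule allI, rule impI, rule impI)
    fix \<kappa> :: "nat \<Rightarrow> 'q"
    assume wt: "card {l. l < r \<and> \<kappa> l \<noteq> 0} \<le> h + 1" and z: "\<forall>t<m. (\<Sum>l<r. \<kappa> l * Pq l t) = 0"
    define cs where "cs = (\<lambda>j. \<Sum>l<r. \<kappa> l * fst (dec l) j)"
    have "\<forall>l<r. fst (dec l) \<in> C" using dec by blast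
    hence csC: "cs \<in> C" unfolding cs_def by (rule Csum)
    have "ext \<kappa> = cs"
    proof
      fix j
      have "(\<Sum>l<r. \<kappa> l * e l j) = (\<Sum>l<r. if j = l then \<kappa> l else 0)"
        by (intro sum.cong) (auto simp: e_def)
      hence "ext \<kappa> j = (\<Sum>l<r. \<kappa> l * e l j)"
        by (simp add: ext_def)
      also have "\<dots> = (\<Sum>l<r. \<kappa> l * (fst (dec l) j + (\<Sum>t<m. Pq l t * w t j)))"
      proof (intro sum.cong refl)
        fix l assume "l \<in> {..<r}"
        hence "e l j = fst (dec l) j + (\<Sum>t<m. sm (snd (dec l) t) (w t)) j" using dec[of l] by simp
        thus "\<kappa> l * e l j = \<kappa> l * (fst (dec l) j + (\<Sum>t<m. Pq l t * w t j))"
          by (simp add: fsum_apply sm_def Pq_def)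
      qed
      also have "\<dots> = cs j + (\<Sum>t<m. (\<Sum>l<r. \<kappa> l * Pq l t) * w t j)"
        by (simp add: cs_def algebra_simps sum.distrib sum_distrib_left sum_distrib_right sum.swap[of _ "{..<r}"])
      also have "\<dots> = cs j" using z by simp
      finally show "ext \<kappa> j = cs j" .
    qed
    with csC obtain u where u: "ext \<kappa> = ext (codeword G k u)" by (auto simp: C_def)
    have same: "\<forall>l<r. \<kappa> l = codeword G k u l" using u by (auto simp: ext_def fun_eq_iff, metis)
    show "\<forall>l<r. \<kappa> l = 0"
    proof (rule ccontr)
      assume "\<not> (\<forall>l<r. \<kappa> l = 0)"
      hence "\<exists>j<r. codeword G k u j \<noteq> 0" using same by auto
      hence "h + 2 \<le> hamming_weight (codeword G k u) r" using code by (auto simp: lin_code_ge_def k_def)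
      also have "hamming_weight (codeword G k u) r = card {l. l < r \<and> \<kappa> l \<noteq> 0}"
        unfolding hamming_weight_def using same by (intro arg_cong[where f=card]) auto
      finally show False using wt by simp
    qed
  qed
qed

lemma subfld_sum: "subfld E \<Longrightarrow> (\<And>x. x \<in> A \<Longrightarrow> f x \<in> E) \<Longrightarrow> sum f A \<in> E"
  by (induction A rule: infinite_finite_induct) (auto simp: subfld_def)

lemma subfld_mult: "subfld E \<Longrightarrow> x \<in> E \<Longrightarrow> y \<in> E \<Longrightarrow> x * y \<in> E"
  by (auto simp: subfld_def)

lemma subfld_diff: "subfld E \<Longrightarrow> x \<in> E \<Longrightarrow> y \<in> E \<Longrightarrow> x - y \<in> E"
  unfolding subfld_def by (metis diff_conv_add_uminus)

lemma subfld_neg: "subfld E \<Longrightarrow> x \<in> E \<Longrightarrow> - x \<in> E"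
  by (auto simp: subfld_def)

lemma subfld_pow: "subfld E \<Longrightarrow> x \<in> E \<Longrightarrow> x ^ n \<in> E"
  by (induction n) (auto simp: subfld_def)

lemma core:
  fixes K FQ :: "'l::field set" and P :: "nat \<Rightarrow> nat \<Rightarrow> 'l" and \<theta> \<omega> a :: "nat \<Rightarrow> 'l"
    and rep :: "nat \<Rightarrow> nat" and S' :: "nat set"
  assumes K: "subfld K" and FQ: "subfld FQ" and KF: "K \<subseteq> FQ" and r: "r > 0"
    and PK: "\<And>l t. P l t \<in> K"
    and pp: "\<forall>\<kappa>. (\<forall>l<r. \<kappa> l \<in> K) \<longrightarrow> card {l. l < r \<and> \<kappa> l \<noteq> 0} \<le> h + 1 \<longrightarrow>
               (\<forall>t<m. (\<Sum>l<r. \<kappa> l * P l t) = 0) \<longrightarrow> (\<forall>l<r. \<kappa> l = 0)"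
    and \<theta>F: "\<forall>t<m. \<theta> t \<in> FQ"
    and \<theta>i: "\<forall>kk. (\<forall>t<m. kk t \<in> K) \<longrightarrow> (\<Sum>t<m. kk t * \<theta> t) \<in> {0} \<longrightarrow> (\<forall>t<m. kk t = 0)"
    and \<omega>i: "\<forall>kk. (\<forall>u<s. kk u \<in> FQ) \<longrightarrow> (\<Sum>u<s. kk u * \<omega> u) \<in> {0} \<longrightarrow> (\<forall>u<s. kk u = 0)"
    and aF: "\<forall>i<g. a i \<in> FQ" and ainj: "inj_on a {..<g}"
    and s: "s = min h g"
    and finS: "finite S'" and cardS: "card S' \<le> h"
    and Sg: "\<forall>j\<in>S'. j div r < g" and repS: "\<forall>j\<in>S'. rep (j div r) \<notin> S'"
    and repdiv: "\<forall>i<g. rep i div r = i"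
  shows "\<forall>k. (\<forall>j\<in>S'. k j \<in> K) \<longrightarrow>
     (\<Sum>j\<in>S'. k j * ((\<Sum>t<m. P (j mod r) t * \<theta> t) - (\<Sum>t<m. P (rep (j div r) mod r) t * \<theta> t))
                   * (\<Sum>u<s. a (j div r) ^ u * \<omega> u)) = 0 \<longrightarrow> (\<forall>j\<in>S'. k j = 0)"
proof (rule allI, rule impI, rule impI)
  fix k assume kK: "\<forall>j\<in>S'. k j \<in> K"
  define y where "y l = (\<Sum>t<m. P l t * \<theta> t)" for l
  define v where "v i = (\<Sum>u<s. a i ^ u * \<omega> u)" for i
  assume sum0: "(\<Sum>j\<in>S'. k j * ((\<Sum>t<m. P (j mod r) t * \<theta> t) - (\<Sum>t<m. P (rep (j div r) mod r) t * \<theta> t))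
                   * (\<Sum>u<s. a (j div r) ^ u * \<omega> u)) = 0"
  define I where "I = (\<lambda>j. j div r) ` S'"
  define Si where "Si i = {j \<in> S'. j div r = i}" for i
  define z where "z i = (\<Sum>j\<in>Si i. k j * (y (j mod r) - y (rep i mod r)))" for i
  have finI: "finite I" using finS by (simp add: I_def)
  have yF: "y l \<in> FQ" for l unfolding y_def
    by (rule subfld_sum[OF FQ]) (use PK KF \<theta>F in \<open>auto intro!: subfld_mult[OF FQ]\<close>)
  have zF: "z i \<in> FQ" for i unfolding z_def
    by (rule subfld_sum[OF FQ]) (use kK KF yF FQ in \<open>auto simp: Si_def intro!: subfld_mult subfld_diff\<close>)
  have "(\<Sum>j\<in>S'. k j * (y (j mod r) - y (rep (j div r) mod r)) * v (j div r)) = (\<Sum>i\<in>I. z i * v i)"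
  proof -
    have "(\<Sum>j\<in>S'. k j * (y (j mod r) - y (rep (j div r) mod r)) * v (j div r))
        = (\<Sum>i\<in>I. \<Sum>j\<in>{x \<in> S'. x div r = i}. k j * (y (j mod r) - y (rep (j div r) mod r)) * v (j div r))"
      by (rule sum.group[symmetric]) (use finS finI in \<open>auto simp: I_def\<close>)
    also have "\<dots> = (\<Sum>i\<in>I. z i * v i)"
      by (intro sum.cong refl) (auto simp: z_def Si_def sum_distrib_right)
    finally show ?thesis .
  qed
  moreover have "(\<Sum>j\<in>S'. k j * (y (j mod r) - y (rep (j div r) mod r)) * v (j div r)) = 0"
    using sum0 unfolding y_def v_def .
  ultimately have s1: "(\<Sum>i\<in>I. z i * v i) = 0" by simp
  have "(\<Sum>i\<in>I. z i * v i) = (\<Sum>i\<in>I. \<Sum>u<s. z i * a i ^ u * \<omega> u)"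
    by (simp add: v_def sum_distrib_left mult.assoc)
  also have "\<dots> = (\<Sum>u<s. \<Sum>i\<in>I. z i * a i ^ u * \<omega> u)" by (rule sum.swap)
  also have "\<dots> = (\<Sum>u<s. (\<Sum>i\<in>I. z i * a i ^ u) * \<omega> u)" by (simp add: sum_distrib_right)
  finally have "(\<Sum>i\<in>I. z i * v i) = (\<Sum>u<s. (\<Sum>i\<in>I. z i * a i ^ u) * \<omega> u)" .
  hence vz0: "(\<Sum>u<s. (\<Sum>i\<in>I. z i * a i ^ u) * \<omega> u) \<in> {0}" using s1 by (simp only: singleton_iff)
  have vzF: "\<forall>u<s. (\<Sum>i\<in>I. z i * a i ^ u) \<in> FQ"
  proof (intro allI impI)
    fix u
    have aI: "\<forall>i\<in>I. a i \<in> FQ" using aF Sg by (auto simp: I_def)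
    show "(\<Sum>i\<in>I. z i * a i ^ u) \<in> FQ"
    proof (rule subfld_sum[OF FQ])
      fix i assume "i \<in> I"
      thus "z i * a i ^ u \<in> FQ" using aI zF by (intro subfld_mult[OF FQ] subfld_pow[OF FQ]) auto
    qed
  qed
  have vz: "\<forall>u<s. (\<Sum>i\<in>I. z i * a i ^ u) = 0"
    by (rule mp[OF mp[OF spec[OF \<omega>i, of "\<lambda>u. (\<Sum>i\<in>I. z i * a i ^ u)"] vzF] vz0])
  have Ig: "I \<subseteq> {..<g}" using Sg by (auto simp: I_def)
  have cardI: "card I \<le> s"
  proof -
    have "card I \<le> card S'" unfolding I_def by (rule card_image_le[OF finS])
    moreover have "card I \<le> g" using card_mono[OF _ Ig] by simp
    ultimately show ?thesis using cardS s by simp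
  qed
  have z0: "\<forall>i\<in>I. z i = 0"
    using vdm[OF finI cardI inj_on_subset[OF ainj Ig]] vz by blast
  show "\<forall>j\<in>S'. k j = 0"
  proof
    fix j0 assume j0: "j0 \<in> S'"
    define i where "i = j0 div r"
    have iI: "i \<in> I" using j0 by (simp add: I_def i_def)
    have ig: "i < g" using Sg j0 by (simp add: i_def)
    define rm where "rm = rep i mod r"
    define cf where "cf t = (\<Sum>j\<in>Si i. k j * (P (j mod r) t - P rm t))" for t
    have finSi: "finite (Si i)" using finS by (simp add: Si_def)
    have "z i = (\<Sum>t<m. cf t * \<theta> t)"
      by (simp add: z_def y_def cf_def rm_def sum_distrib_left sum_distrib_right sum.swap[of _ "Si i"]
          algebra_simps sum_subtractf)
    hence cfz: "(\<Sum>t<m. cf t * \<theta> t) \<in> {0}" using z0 iI by simp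
    have cfK: "\<forall>t<m. cf t \<in> K"
      unfolding cf_def using kK PK by (auto simp: Si_def intro!: subfld_sum[OF K] subfld_mult[OF K] subfld_diff[OF K])
    have cf0: "\<forall>t<m. cf t = 0" by (rule mp[OF mp[OF spec[OF \<theta>i, of cf] cfK] cfz])
    define \<kappa> where "\<kappa> l = (if l = rm then - (\<Sum>j\<in>Si i. k j) else 0) + (if i * r + l \<in> Si i then k (i * r + l) else 0)" for l
    have repnot: "rep i \<notin> Si i" using repS j0 by (auto simp: Si_def i_def)
    have Sidec: "j = i * r + j mod r" if "j \<in> Si i" for j
      using that unfolding Si_def by (metis (mono_tags, lifting) div_mult_mod_eq mem_Collect_eq mult.commute)
    have \<kappa>K: "\<forall>l<r. \<kappa> l \<in> K"
    proof (intro allI impI)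
      fix l
      have "- (\<Sum>j\<in>Si i. k j) \<in> K" using kK by (auto simp: Si_def intro!: subfld_neg[OF K] subfld_sum[OF K])
      moreover have "0 \<in> K" using K by (simp add: subfld_def)
      moreover have "i * r + l \<in> Si i \<Longrightarrow> k (i * r + l) \<in> K" using kK by (auto simp: Si_def)
      ultimately show "\<kappa> l \<in> K" unfolding \<kappa>_def using K by (auto simp: subfld_def)
    qed
    have wt: "card {l. l < r \<and> \<kappa> l \<noteq> 0} \<le> h + 1"
    proof -
      have "{l. l < r \<and> \<kappa> l \<noteq> 0} \<subseteq> insert rm ((\<lambda>j. j mod r) ` Si i)"
      proof
        fix l assume l: "l \<in> {l. l < r \<and> \<kappa> l \<noteq> 0}"
        show "l \<in> insert rm ((\<lambda>j. j mod r) ` Si i)"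
        proof (cases "l = rm")
          case False
          hence "i * r + l \<in> Si i" using l by (auto simp: \<kappa>_def split: if_splits)
          moreover have "(i * r + l) mod r = l" using l by simp
          ultimately show ?thesis by (metis image_eqI insertI2)
        qed simp
      qed
      hence "card {l. l < r \<and> \<kappa> l \<noteq> 0} \<le> card (insert rm ((\<lambda>j. j mod r) ` Si i))"
        by (intro card_mono) (auto simp: finSi)
      also have "\<dots> \<le> Suc (card ((\<lambda>j. j mod r) ` Si i))" by (rule card_insert_le_m1) simp_all
      also have "\<dots> \<le> Suc (card (Si i))" using card_image_le[OF finSi] by simp
      also have "card (Si i) \<le> card S'" using finS by (intro card_mono) (auto simp: Si_def)
      finally show ?thesis using cardS by simp
    qed
    have eqs: "\<forall>t<m. (\<Sum>l<r. \<kappa> l * P l t) = 0"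
    proof (intro allI impI)
      fix t assume tm: "t < m"
      have rmr: "rm < r" using r by (simp add: rm_def)
      have "(\<Sum>l<r. \<kappa> l * P l t) = (\<Sum>l<r. (if l = rm then - (\<Sum>j\<in>Si i. k j) * P l t else 0))
              + (\<Sum>l<r. (if i * r + l \<in> Si i then k (i * r + l) * P l t else 0))"
      proof -
        have "(\<Sum>l<r. \<kappa> l * P l t) = (\<Sum>l<r. (if l = rm then - (\<Sum>j\<in>Si i. k j) * P l t else 0)
              + (if i * r + l \<in> Si i then k (i * r + l) * P l t else 0))"
          by (intro sum.cong refl) (simp add: \<kappa>_def distrib_right)
        thus ?thesis by (simp only: sum.distrib)
      qed
      also have "(\<Sum>l<r. (if l = rm then - (\<Sum>j\<in>Si i. k j) * P l t else 0)) = - (\<Sum>j\<in>Si i. k j) * P rm t"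
        using rmr by (simp add: sum.delta')
      also have "(\<Sum>l<r. (if i * r + l \<in> Si i then k (i * r + l) * P l t else 0))
               = (\<Sum>l\<in>{l. l < r \<and> i * r + l \<in> Si i}. k (i * r + l) * P l t)"
        by (simp add: sum.If_cases lessThan_def Collect_conj_eq[symmetric])
      also have "\<dots> = (\<Sum>j\<in>Si i. k j * P (j mod r) t)"
      proof (rule sum.reindex_bij_witness[of _ "\<lambda>j. j mod r" "\<lambda>l. i * r + l"])
        fix j assume "j \<in> Si i"
        thus "i * r + j mod r = j" using Sidec by simp
        show "j mod r \<in> {l. l < r \<and> i * r + l \<in> Si i}" using \<open>j \<in> Si i\<close> Sidec r by auto
      next
        fix l assume "l \<in> {l. l < r \<and> i * r + l \<in> Si i}"
        thus "(i * r + l) mod r = l" "i * r + l \<in> Si i"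
          "k (i * r + l) * P ((i * r + l) mod r) t = k (i * r + l) * P l t" by auto
      qed
      also have "- (\<Sum>j\<in>Si i. k j) * P rm t + (\<Sum>j\<in>Si i. k j * P (j mod r) t) = cf t"
        by (simp add: cf_def algebra_simps sum_subtractf sum_distrib_right sum_distrib_left mult.commute)
      also have "\<dots> = 0" using cf0 tm by simp
      finally show "(\<Sum>l<r. \<kappa> l * P l t) = 0" .
    qed
    have \<kappa>0: "\<forall>l<r. \<kappa> l = 0" by (rule mp[OF mp[OF mp[OF spec[OF pp, of \<kappa>] \<kappa>K] wt] eqs])
    have j0Si: "j0 \<in> Si i" using j0 by (simp add: Si_def i_def)
    define l0 where "l0 = j0 mod r"
    have "i * r + l0 = j0" using Sidec[OF j0Si] by (simp add: l0_def)
    moreover have "l0 \<noteq> rm"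
    proof
      assume "l0 = rm"
      hence "j0 = rep i" using Sidec[OF j0Si] repdiv ig
        by (metis div_mult_mod_eq mult.commute l0_def rm_def)
      thus False using repnot j0Si by simp
    qed
    moreover have "l0 < r" using r by (simp add: l0_def)
    ultimately have "\<kappa> l0 = k j0" using j0Si by (simp add: \<kappa>_def)
    thus "k j0 = 0" using \<kappa>0 \<open>l0 < r\<close> by simp
  qed
qed

lemma grp_iff: "(r::nat) > 0 \<Longrightarrow> (i * r \<le> j \<and> j < (i + 1) * r) = (j div r = i)"
proof
  assume r: "r > 0" and "i * r \<le> j \<and> j < (i + 1) * r"
  thus "j div r = i" by (intro div_nat_eqI) (auto simp: mult.commute)
next
  assume r: "r > 0" and "j div r = i"
  thus "i * r \<le> j \<and> j < (i + 1) * r"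
    by (metis add.commute div_mult_mod_eq le_add2 mod_less_divisor mult.commute nat_add_left_cancel_less mult_Suc Suc_eq_plus1 add_Suc_right)
qed

lemma subfld_add: "subfld E \<Longrightarrow> x \<in> E \<Longrightarrow> y \<in> E \<Longrightarrow> x + y \<in> E"
  by (auto simp: subfld_def)

theorem lemma3p8:
  fixes r h g m q n :: nat
  assumes "r \<ge> 2" and "h \<ge> 2" and "g > 0" and "m > 0" and "g + h < g * r"
    and "n = r * g"
    and "\<exists>p k. prime p \<and> k > 0 \<and> q = p ^ k"
    and "real q ^ m \<ge> real (m * n) / real r"
    and "m \<ge> r \<or>
         (m < r \<and> card (UNIV :: 'q::{finite,field} set) = q \<and>
          (\<exists>G :: nat \<Rightarrow> nat \<Rightarrow> 'q. lin_code_ge G r (r - m) (h + 2)))"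
    and "card (UNIV :: 'l::{finite,field} set) = q ^ min (h * m) (n * m div r)"
  shows "\<exists>(A :: nat \<Rightarrow> nat \<Rightarrow> nat \<Rightarrow> 'l) D. MR_LRC g r h 1 A D"
proof -
  note r2 = assms(1) and h2 = assms(2) and g0 = assms(3) and m0 = assms(4) and ghr = assms(5)
    and nn = assms(6) and ppow = assms(7) and qm = assms(8) and cases = assms(9) and cl = assms(10)
  have r0: "r > 0" using r2 by simp
  obtain p k where p: "prime p" "k > 0" "q = p ^ k" using ppow by blast
  have p2: "p \<ge> 2" using p(1) prime_ge_2_nat by blast
  have "p ^ 1 \<le> p ^ k" using p(2) p2 by (intro power_increasing) auto
  hence q2: "q \<ge> 2" using p2 p(3) by simp
  define s where "s = min h g"
  have s0: "s > 0" using h2 g0 by (simp add: s_def)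
  have nm: "n * m div r = g * m" using r0 nn by simp
  have "min (h * m) (g * m) = m * s" unfolding s_def
    by (cases "h \<le> g") (auto simp: min_def mult.commute)
  hence cl': "card (UNIV::'l set) = q ^ (m * s)" using cl nm by simp
  define Q where "Q = q ^ m"
  have "q ^ 1 \<le> q ^ m" using m0 q2 by (intro power_increasing) auto
  hence Q2: "Q \<ge> 2" using q2 by (simp add: Q_def)
  have clQ: "card (UNIV::'l set) = Q ^ s" using cl' by (simp add: Q_def power_mult)
  have ms0: "m * s > 0" using m0 s0 by simp
  have chl: "CHAR('l) = p" using ff_char_eq[OF p(1), of "k * (m * s)"] cl' p(3) by (simp add: power_mult)
  have addqt: "(x + y) ^ (q ^ t) = x ^ (q ^ t) + y ^ (q ^ t)" for x y :: 'l and t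
    by (rule frob_add[of _ "k * t"]) (simp add: chl p(3) power_mult)
  have addq: "(x + y) ^ q = x ^ q + y ^ q" for x y :: 'l using addqt[of x y 1] by simp
  have addQ: "(x + y) ^ Q = x ^ Q + y ^ Q" for x y :: 'l using addqt[of x y m] by (simp add: Q_def)
  have q0: "q > 0" and Q0: "Q > 0" using q2 Q2 by auto
  have cardK: "card (Fx q :: 'l set) = q" by (rule Fx_card[OF cl' ms0 q2])
  have cardFQ: "card (Fx Q :: 'l set) = Q" by (rule Fx_card[OF clQ s0 Q2])
  have Ksub: "subfld (Fx q :: 'l set)" by (rule Fx_subfld[OF addq q0])
  have FQsub: "subfld (Fx Q :: 'l set)" by (rule Fx_subfld[OF addQ Q0])
  have KF: "(Fx q :: 'l set) \<subseteq> Fx Q"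
  proof
    fix x :: 'l assume "x \<in> Fx q"
    hence xq: "x ^ q = x" by (simp add: Fx_def)
    have "x ^ (q ^ j) = x" for j
    proof (induction j)
      case (Suc j)
      have "x ^ (q ^ Suc j) = (x ^ q) ^ (q ^ j)" by (simp add: power_mult)
      thus ?case using xq Suc by simp
    qed simp
    thus "x \<in> Fx Q" by (simp add: Fx_def Q_def)
  qed
  have Qg: "g \<le> Q"
  proof -
    have "real (m * n) / real r = real (m * g)" using r0 nn by (simp add: field_simps)
    hence "real (m * g) \<le> real Q" using qm by (simp add: Q_def)
    hence "m * g \<le> Q" by linarith
    moreover have "g \<le> m * g" using m0 by simp
    ultimately show ?thesis by linarith
  qed
  have "\<exists>P :: nat \<Rightarrow> nat \<Rightarrow> 'l. (\<forall>l t. P l t \<in> Fx q) \<and>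
     (\<forall>\<kappa>. (\<forall>l<r. \<kappa> l \<in> Fx q) \<longrightarrow> card {l. l < r \<and> \<kappa> l \<noteq> 0} \<le> h + 1 \<longrightarrow>
               (\<forall>t<m. (\<Sum>l<r. \<kappa> l * P l t) = 0) \<longrightarrow> (\<forall>l<r. \<kappa> l = 0))"
  proof (cases "m \<ge> r")
    case True
    define P :: "nat \<Rightarrow> nat \<Rightarrow> 'l" where "P l t = (if l = t then 1 else 0)" for l t
    have "\<forall>l t. P l t \<in> Fx q" using q0 by (auto simp: P_def Fx_def)
    moreover have "\<forall>\<kappa>. (\<forall>l<r. \<kappa> l \<in> Fx q) \<longrightarrow> card {l. l < r \<and> \<kappa> l \<noteq> 0} \<le> h + 1 \<longrightarrow>
               (\<forall>t<m. (\<Sum>l<r. \<kappa> l * P l t) = 0) \<longrightarrow> (\<forall>l<r. \<kappa> l = 0)"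
    proof (intro allI impI)
      fix \<kappa> :: "nat \<Rightarrow> 'l" and l
      assume z: "\<forall>t<m. (\<Sum>l<r. \<kappa> l * P l t) = 0" and lr: "l < r"
      have "(\<Sum>l'<r. \<kappa> l' * P l' l) = (\<Sum>l'<r. if l' = l then \<kappa> l' else 0)"
        by (intro sum.cong) (auto simp: P_def)
      also have "\<dots> = \<kappa> l" using lr by simp
      finally show "\<kappa> l = 0" using z lr True by simp
    qed
    ultimately show ?thesis by blast
  next
    case False
    hence mr: "m < r" and cq: "card (UNIV :: 'q set) = q"
      and "\<exists>G :: nat \<Rightarrow> nat \<Rightarrow> 'q. lin_code_ge G r (r - m) (h + 2)" using cases by auto
    then obtain G :: "nat \<Rightarrow> nat \<Rightarrow> 'q" where G: "lin_code_ge G r (r - m) (h + 2)" by blast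
    obtain Pq :: "nat \<Rightarrow> nat \<Rightarrow> 'q" where Pq: "\<forall>\<kappa>. card {l. l < r \<and> \<kappa> l \<noteq> 0} \<le> h + 1 \<longrightarrow>
           (\<forall>t<m. (\<Sum>l<r. \<kappa> l * Pq l t) = 0) \<longrightarrow> (\<forall>l<r. \<kappa> l = 0)"
      using code_points[OF G mr] by blast
    have chq: "CHAR('q) = p" using ff_char_eq[OF p(1), of k] cq p(3) by simp
    obtain \<psi> :: "'q \<Rightarrow> 'l" where \<psi>add: "\<forall>x y. \<psi> (x+y) = \<psi> x + \<psi> y" and \<psi>mult: "\<forall>x y. \<psi> (x*y) = \<psi> x * \<psi> y"
      and \<psi>inj: "inj \<psi>" and \<psi>rng: "range \<psi> = Fx q"
      using embed[OF cq cl' ms0 q2] chq chl by auto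
    have \<psi>0: "\<psi> 0 = 0" using \<psi>add[rule_format, of 0 0] by (metis add_0 add_cancel_right_right)
    have \<psi>sum: "\<psi> (\<Sum>l<n. f l) = (\<Sum>l<n. \<psi> (f l))" for f and n :: nat
      by (induction n) (simp_all add: \<psi>0 \<psi>add)
    define P :: "nat \<Rightarrow> nat \<Rightarrow> 'l" where "P l t = \<psi> (Pq l t)" for l t
    have "\<forall>l t. P l t \<in> Fx q" using \<psi>rng by (auto simp: P_def)
    moreover have "\<forall>\<kappa>. (\<forall>l<r. \<kappa> l \<in> Fx q) \<longrightarrow> card {l. l < r \<and> \<kappa> l \<noteq> 0} \<le> h + 1 \<longrightarrow>
               (\<forall>t<m. (\<Sum>l<r. \<kappa> l * P l t) = 0) \<longrightarrow> (\<forall>l<r. \<kappa> l = 0)"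
    proof (rule allI, rule impI, rule impI, rule impI)
      fix \<kappa> :: "nat \<Rightarrow> 'l"
      assume \<kappa>K: "\<forall>l<r. \<kappa> l \<in> Fx q" and wt: "card {l. l < r \<and> \<kappa> l \<noteq> 0} \<le> h + 1"
        and z: "\<forall>t<m. (\<Sum>l<r. \<kappa> l * P l t) = 0"
      define \<kappa>q where "\<kappa>q l = inv_into UNIV \<psi> (\<kappa> l)" for l
      have \<kappa>q: "\<psi> (\<kappa>q l) = \<kappa> l" if "l < r" for l
        unfolding \<kappa>q_def using \<kappa>K that \<psi>rng by (metis f_inv_into_f)
      have "{l. l < r \<and> \<kappa>q l \<noteq> 0} = {l. l < r \<and> \<kappa> l \<noteq> 0}"
      proof (intro Collect_cong conj_cong refl)
        fix l assume "l < r"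
        thus "(\<kappa>q l \<noteq> 0) = (\<kappa> l \<noteq> 0)" using \<kappa>q[of l] \<psi>0 \<psi>inj by (metis injD)
      qed
      hence wtq: "card {l. l < r \<and> \<kappa>q l \<noteq> 0} \<le> h + 1" using wt by simp
      have zq: "\<forall>t<m. (\<Sum>l<r. \<kappa>q l * Pq l t) = 0"
      proof (intro allI impI)
        fix t assume "t < m"
        have "\<psi> (\<Sum>l<r. \<kappa>q l * Pq l t) = (\<Sum>l<r. \<kappa> l * P l t)"
          by (simp add: \<psi>sum \<psi>mult \<kappa>q P_def)
        also have "\<dots> = \<psi> 0" using z \<open>t < m\<close> \<psi>0 by simp
        finally show "(\<Sum>l<r. \<kappa>q l * Pq l t) = 0" using \<psi>inj by (simp add: inj_eq)
      qed
      have "\<forall>l<r. \<kappa>q l = 0" using Pq wtq zq by blast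
      thus "\<forall>l<r. \<kappa> l = 0" using \<kappa>q \<psi>0 by metis
    qed
    ultimately show ?thesis by blast
  qed
  then obtain P :: "nat \<Rightarrow> nat \<Rightarrow> 'l" where PK: "\<And>l t. P l t \<in> Fx q" and
    pp: "\<forall>\<kappa>. (\<forall>l<r. \<kappa> l \<in> Fx q) \<longrightarrow> card {l. l < r \<and> \<kappa> l \<noteq> 0} \<le> h + 1 \<longrightarrow>
               (\<forall>t<m. (\<Sum>l<r. \<kappa> l * P l t) = 0) \<longrightarrow> (\<forall>l<r. \<kappa> l = 0)" by blast
  have Kfin: "finite (Fx q :: 'l set)" and FQfin: "finite (Fx Q :: 'l set)" by auto
  have sub0: "{0::'l} \<subseteq> Fx Q" using Q0 by (simp add: Fx_def)
  obtain \<theta> :: "nat \<Rightarrow> 'l" where \<theta>F: "\<forall>t<m. \<theta> t \<in> Fx Q"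
    and \<theta>i: "\<forall>kk. (\<forall>t<m. kk t \<in> Fx q) \<longrightarrow> (\<Sum>t<m. kk t * \<theta> t) \<in> {0} \<longrightarrow> (\<forall>t<m. kk t = 0)"
  proof -
    have c: "card (Fx Q :: 'l set) = card {0::'l} * card (Fx q :: 'l set) ^ m"
      using cardFQ cardK by (simp add: Q_def)
    have "\<exists>w. (\<forall>t<m. w t \<in> Fx Q) \<and>
           (\<forall>k. (\<forall>t<m. k t \<in> Fx q) \<longrightarrow> (\<Sum>t<m. k t * w t) \<in> {0::'l} \<longrightarrow> (\<forall>t<m. k t = 0)) \<and>
           (\<forall>v\<in>Fx Q. \<exists>k c. (\<forall>t<m. k t \<in> Fx q) \<and> c \<in> {0} \<and> v = c + (\<Sum>t<m. k t * w t))"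
      by (rule greedy[where sm = "(*)"])
         (use Ksub FQsub KF sub0 c in \<open>auto simp: algebra_simps intro: subfld_mult subfld_add\<close>)
    thus ?thesis using that by blast
  qed
  obtain \<omega> :: "nat \<Rightarrow> 'l"
    where \<omega>i: "\<forall>kk. (\<forall>u<s. kk u \<in> Fx Q) \<longrightarrow> (\<Sum>u<s. kk u * \<omega> u) \<in> {0} \<longrightarrow> (\<forall>u<s. kk u = 0)"
  proof -
    have c: "card (UNIV :: 'l set) = card {0::'l} * card (Fx Q :: 'l set) ^ s"
      using cardFQ clQ by simp
    have "\<exists>w. (\<forall>t<s. w t \<in> (UNIV::'l set)) \<and>
           (\<forall>k. (\<forall>t<s. k t \<in> Fx Q) \<longrightarrow> (\<Sum>t<s. k t * w t) \<in> {0::'l} \<longrightarrow> (\<forall>t<s. k t = 0)) \<and>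
           (\<forall>v\<in>UNIV. \<exists>k c. (\<forall>t<s. k t \<in> Fx Q) \<and> c \<in> {0} \<and> v = c + (\<Sum>t<s. k t * w t))"
      by (rule greedy[where sm = "(*)"])
         (use FQsub c in \<open>auto simp: algebra_simps\<close>)
    thus ?thesis using that by blast
  qed
  obtain a :: "nat \<Rightarrow> 'l" where aF: "a ` {..<g} \<subseteq> Fx Q" and ainj: "inj_on a {..<g}"
    using card_le_inj[of "{..<g}" "Fx Q :: 'l set"] Qg cardFQ by auto
  define y where "y l = (\<Sum>t<m. P l t * \<theta> t)" for l
  define v where "v i = (\<Sum>u<s. a i ^ u * \<omega> u)" for i
  define \<beta> where "\<beta> j = y (j mod r) * v (j div r)" for j
  define A :: "nat \<Rightarrow> nat \<Rightarrow> nat \<Rightarrow> 'l" where "A i x z = 1" for i x z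
  define D :: "nat \<Rightarrow> nat \<Rightarrow> 'l" where "D t j = \<beta> j ^ (q ^ t)" for t j
  have "MR_LRC g r h 1 A D"
    unfolding MR_LRC_def
  proof (intro conjI allI impI)
    show "0 < (1::nat)" "0 < g" "0 < r" "0 < h" using g0 r0 h2 by auto
    show "g * 1 + h < g * r" using ghr by simp
  next
    fix i assume "i < g"
    show "lin_code (A i) r 1 (r - 1 + 1)"
      unfolding lin_code_def lin_code_ge_def rows_lin_indep_def hamming_weight_def
    proof (intro conjI allI impI)
      fix u :: "nat \<Rightarrow> 'l" and i' :: nat
      assume "\<forall>j<r. codeword (A i) 1 u j = 0" "i' < 1"
      thus "u i' = 0" using r0 by (auto simp: codeword_def A_def)
    next
      fix u :: "nat \<Rightarrow> 'l"
      assume "\<exists>j<r. codeword (A i) 1 u j \<noteq> 0"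
      hence "u 0 \<noteq> 0" by (auto simp: codeword_def A_def)
      thus "r - 1 + 1 \<le> card {j. j < r \<and> codeword (A i) 1 u j \<noteq> 0}"
        using r0 by (simp add: codeword_def A_def)
    next
      show "\<exists>u. (\<exists>j<r. codeword (A i) 1 u j \<noteq> 0) \<and> card {j. j < r \<and> codeword (A i) 1 u j \<noteq> 0} = r - 1 + 1"
        by (rule exI[of _ "\<lambda>_. 1"]) (use r0 in \<open>auto simp: codeword_def A_def\<close>)
    qed
  next
    fix S assume S: "S \<subseteq> {0..<g * r} \<and> card S = g * 1 + h \<and> (\<forall>i<g. 1 \<le> card (S \<inter> {i * r..<(i + 1) * r}))"
    show "cols_lin_indep (block_pcm g r 1 A D) (g * 1 + h) S"
      unfolding cols_lin_indep_def
    proof (intro allI impI)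
      fix c :: "nat \<Rightarrow> 'l"
      assume eqs: "\<forall>i<g * 1 + h. (\<Sum>j\<in>S. c j * block_pcm g r 1 A D i j) = 0"
      have finS: "finite S" using S finite_subset by blast
      have Sg: "j div r < g" if "j \<in> S" for j
      proof -
        have "j < g * r" using S that by auto
        thus ?thesis by (simp add: less_mult_imp_div_less)
      qed
      have loc: "(\<Sum>j\<in>{j\<in>S. j div r = i}. c j) = 0" if ig: "i < g" for i
      proof -
        have "(\<Sum>j\<in>S. c j * block_pcm g r 1 A D i j) = 0" using eqs ig by simp
        moreover have bp: "block_pcm g r 1 A D i j = (if j div r = i then 1 else 0)" for j
          using ig grp_iff[OF r0, of i j] by (simp add: block_pcm_def A_def)
        moreover have "(\<Sum>j\<in>S. c j * block_pcm g r 1 A D i j) = (\<Sum>j\<in>S. if j div r = i then c j else 0)"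
          by (intro sum.cong refl) (simp only: bp, simp)
        ultimately have "(\<Sum>j\<in>S. if j div r = i then c j else 0) = 0" by simp
        thus ?thesis by (simp add: sum.inter_filter[OF finS])
      qed
      have deq: "(\<Sum>j\<in>S. c j * \<beta> j ^ (q ^ t)) = 0" if th: "t < h" for t
      proof -
        have "(\<Sum>j\<in>S. c j * block_pcm g r 1 A D (g + t) j) = 0" using eqs th by simp
        thus ?thesis by (simp add: block_pcm_def D_def)
      qed
      define rep where "rep i = (SOME j. j \<in> S \<and> j div r = i)" for i
      have rep: "rep i \<in> S \<and> rep i div r = i" if ig: "i < g" for i
      proof -
        have "S \<inter> {i * r..<(i + 1) * r} \<noteq> {}" using S ig by (metis card.empty not_one_le_zero)
        then obtain j where "j \<in> S" "i * r \<le> j" "j < (i + 1) * r" by auto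
        hence "\<exists>j. j \<in> S \<and> j div r = i" using grp_iff[OF r0] by blast
        thus ?thesis unfolding rep_def by (rule someI_ex)
      qed
      define R where "R = rep ` {..<g}"
      define S' where "S' = S - R"
      have RS: "R \<subseteq> S" using rep by (auto simp: R_def)
      have injrep: "inj_on rep {..<g}" by (rule inj_onI) (metis rep lessThan_iff)
      have cardR: "card R = g" unfolding R_def using card_image[OF injrep] by simp
      have cardS': "card S' = h" unfolding S'_def using card_Diff_subset[OF finite_subset[OF RS finS] RS] S cardR by simp
      have finS': "finite S'" using finS by (simp add: S'_def)
      have repS': "\<forall>j\<in>S'. rep (j div r) \<notin> S'" using Sg by (auto simp: S'_def R_def)
      have repdiv: "\<forall>i<g. rep i div r = i" using rep by blast
      have S'g: "\<forall>j\<in>S'. j div r < g" using Sg by (auto simp: S'_def)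
      define \<gamma> where "\<gamma> j = \<beta> j - \<beta> (rep (j div r))" for j
      have \<gamma>R: "\<gamma> j = 0" if jR: "j \<in> R" for j
      proof -
        obtain i where i: "i < g" "j = rep i" using jR by (auto simp: R_def)
        thus ?thesis using rep[OF i(1)] by (simp add: \<gamma>_def)
      qed
      have \<gamma>eq: "\<gamma> j = ((\<Sum>t<m. P (j mod r) t * \<theta> t) - (\<Sum>t<m. P (rep (j div r) mod r) t * \<theta> t))
                   * (\<Sum>u<s. a (j div r) ^ u * \<omega> u)" if "j \<in> S'" for j
        using that S'g repdiv by (simp add: \<gamma>_def \<beta>_def y_def v_def algebra_simps)
      have indep: "\<forall>k. (\<forall>j\<in>S'. k j \<in> Fx q) \<longrightarrow> (\<Sum>j\<in>S'. k j * \<gamma> j) = 0 \<longrightarrow> (\<forall>j\<in>S'. k j = 0)"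
      proof (intro allI impI)
        fix kk :: "nat \<Rightarrow> 'l" assume kK: "\<forall>j\<in>S'. kk j \<in> Fx q" and z: "(\<Sum>j\<in>S'. kk j * \<gamma> j) = 0"
        have "(\<Sum>j\<in>S'. kk j * ((\<Sum>t<m. P (j mod r) t * \<theta> t) - (\<Sum>t<m. P (rep (j div r) mod r) t * \<theta> t))
                   * (\<Sum>u<s. a (j div r) ^ u * \<omega> u)) = (\<Sum>j\<in>S'. kk j * \<gamma> j)"
          by (intro sum.cong refl) (simp add: \<gamma>eq mult.assoc)
        hence z': "(\<Sum>j\<in>S'. kk j * ((\<Sum>t<m. P (j mod r) t * \<theta> t) - (\<Sum>t<m. P (rep (j div r) mod r) t * \<theta> t))
                   * (\<Sum>u<s. a (j div r) ^ u * \<omega> u)) = 0" using z by simp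
        have aF': "\<forall>i<g. a i \<in> Fx Q" using aF by auto
        show "\<forall>j\<in>S'. kk j = 0"
          using core[OF Ksub FQsub KF r0 PK pp \<theta>F \<theta>i \<omega>i aF' ainj s_def finS' _ S'g repS' repdiv] cardS' kK z'
          by simp
      qed
      have meqs: "\<forall>t<h. (\<Sum>j\<in>S'. c j * \<gamma> j ^ (q ^ t)) = 0"
      proof (intro allI impI)
        fix t assume th: "t < h"
        have qt0: "q ^ t > 0" using q0 by simp
        have "(\<Sum>j\<in>S'. c j * \<gamma> j ^ (q ^ t)) = (\<Sum>j\<in>S. c j * \<gamma> j ^ (q ^ t))"
        proof (rule sum.mono_neutral_left[OF finS])
          show "S' \<subseteq> S" by (auto simp: S'_def)
          show "\<forall>j\<in>S - S'. c j * \<gamma> j ^ (q ^ t) = 0" using \<gamma>R qt0 by (auto simp: S'_def)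
        qed
        also have "\<dots> = (\<Sum>j\<in>S. c j * \<beta> j ^ (q ^ t)) - (\<Sum>j\<in>S. c j * \<beta> (rep (j div r)) ^ (q ^ t))"
          by (simp add: \<gamma>_def frob_diff[OF addqt] algebra_simps sum_subtractf)
        also have "(\<Sum>j\<in>S. c j * \<beta> (rep (j div r)) ^ (q ^ t))
            = (\<Sum>i<g. \<Sum>j\<in>{x \<in> S. x div r = i}. c j * \<beta> (rep (j div r)) ^ (q ^ t))"
          by (rule sum.group[symmetric]) (use finS Sg in auto)
        also have "\<dots> = (\<Sum>i<g. \<beta> (rep i) ^ (q ^ t) * (\<Sum>j\<in>{x \<in> S. x div r = i}. c j))"
          by (intro sum.cong refl) (auto simp: sum_distrib_left mult.commute)
        also have "\<dots> = 0" using loc by simp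
        finally show "(\<Sum>j\<in>S'. c j * \<gamma> j ^ (q ^ t)) = 0" using deq th by simp
      qed
      have cS': "\<forall>j\<in>S'. c j = 0"
        by (rule moore[OF addq q0 finS' _ indep meqs]) (simp add: cardS')
      show "\<forall>j\<in>S. c j = 0"
      proof
        fix j assume jS: "j \<in> S"
        show "c j = 0"
        proof (cases "j \<in> S'")
          case True thus ?thesis using cS' by simp
        next
          case False
          hence "j \<in> R" using jS by (simp add: S'_def)
          then obtain i where i: "i < g" "j = rep i" by (auto simp: R_def)
          have "(\<Sum>j'\<in>{j'\<in>S. j' div r = i}. c j') = c j + (\<Sum>j'\<in>{j'\<in>S. j' div r = i} - {j}. c j')"
            using finS jS rep[OF i(1)] i by (subst sum.remove) auto
          also have "(\<Sum>j'\<in>{j'\<in>S. j' div r = i} - {j}. c j') = 0"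
          proof (rule sum.neutral, rule ballI)
            fix j' assume j': "j' \<in> {j'\<in>S. j' div r = i} - {j}"
            have "j' \<notin> R"
            proof
              assume "j' \<in> R"
              then obtain i' where "i' < g" "j' = rep i'" by (auto simp: R_def)
              thus False using j' rep i by auto
            qed
            hence "j' \<in> S'" using j' by (simp add: S'_def)
            thus "c j' = 0" using cS' by simp
          qed
          finally show ?thesis using loc[OF i(1)] by simp
        qed
      qed
    qed
  qed
  thus ?thesis by blast
qed

end
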